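(* Let $1\le k<n$. Then $\mathbb{Y}_{OG(k,2n+1)}=\Theta(k,2n+1)$, and $f_k:\mathbb{Y}_{OG(k,2n+1)}\to P(n-k,n)$ is a bijection.
   Context: Root system $B_n$: positive roots $e_a\pm e_b$ ($a<b$), $e_a$; simple roots $e_i-e_{i+1}$ ($i<n$), $e_n$; order $\alpha\le\beta$ iff $\beta-\alpha$ is a nonnegative integer combination of simple roots. $W^{OG(k,2n+1)}$ is the set of signed permutations $w=(y_1,\dots,y_{k-r},\overline{z_r},\dots,\overline{z_1},v_1,\dots,v_{n-k})$ of $1,\dots,n$ (bars = negative entries) with $0\le r\le k$, $y_1<\dots<y_{k-r}$, $z_r>\dots>z_1$, $v_1<\dots<v_{n-k}$, acting by $e_a\mapsto\pm e_{|w(a)|}$; $\mathrm{Inv}(w)$ is the set of positive roots sent to negative roots, and $\mathbb{Y}_{OG(k,2n+1)}=\{\mathrm{Inv}(w): w\in W^{OG(k,2n+1)}\}$. Base region: roots $e_a\pm e_b$ ($a\le k<b$), $e_a$ ($a\le k$); its $i$-th row consists of $e_{k+1-i}\pm e_b$ ($b>k$) and $e_{k+1-i}$. Top region: $e_a+e_b$, $a<b\le k$. For a set $S$, $\lambda^{(1)}_i$ = number of roots of $S$ in base row $i$, $\lambda^{(2)}_i$ = number of roots of $S$ of the form $e_a+e_{k+1-i}$ with $a<k+1-i$, and $f_k(S)=(\lambda^{(1)}_i+\lambda^{(2)}_i)_{1\le i\le k}$. $\Theta(k,2n+1)$ is the set of subsets $S$ of the union of the two regions meeting each region in a lower order ideal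 and satisfying: for each top root $e_a+e_b$, $e_a+e_b\in S$ if $S$ has more than $2n+1-2k$ roots in the base rows indexed by $a$ and $b$ (rows $k+1-a$, $k+1-b$) combined, and $e_a+e_b\notin S$ if fewer. $P(n-k,n)$ is the set of partitions $\gamma=(\gamma_1\ge\dots\ge\gamma_k\ge0)$ with $\gamma_1\le 2n-k$ and $\gamma_i>\gamma_{i+1}$ whenever $\gamma_i>n-k$. *)

theory Defs
  imports Main
begin

text \<open>Roots of type B_n: e_a - e_b, e_a + e_b, e_a (indices 1..n).\<close>
datatype root = RMinus nat nat | RPlus nat nat | RShort nat

definition unitv :: "nat \<Rightarrow> nat \<Rightarrow> int" where
  "unitv a = (\<lambda>j. if j = a then 1 else 0)"

fun rvec :: "root \<Rightarrow> nat \<Rightarrow> int" where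
  "rvec (RMinus a b) = (\<lambda>j. unitv a j - unitv b j)"
| "rvec (RPlus a b) = (\<lambda>j. unitv a j + unitv b j)"
| "rvec (RShort a) = unitv a"

definition posroots :: "nat \<Rightarrow> root set" where
  "posroots n = {RMinus a b | a b. 1 \<le> a \<and> a < b \<and> b \<le> n}
              \<union> {RPlus a b | a b. 1 \<le> a \<and> a < b \<and> b \<le> n}
              \<union> {RShort a | a. 1 \<le> a \<and> a \<le> n}"

definition simple :: "nat \<Rightarrow> nat \<Rightarrow> nat \<Rightarrow> int" where
  "simple n i = (if i < n then rvec (RMinus i (Suc i)) else rvec (RShort n))"

definition root_le :: "nat \<Rightarrow> root \<Rightarrow> root \<Rightarrow> bool" where
  "root_le n \<alpha> \<beta> \<longleftrightarrow> (\<exists>c :: nat \<Rightarrow> nat.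
      (\<lambda>j. rvec \<beta> j - rvec \<alpha> j) = (\<lambda>j. \<Sum>i\<in>{1..n}. int (c i) * simple n i j))"

definition lower_ideal :: "nat \<Rightarrow> root set \<Rightarrow> root set \<Rightarrow> bool" where
  "lower_ideal n R S \<longleftrightarrow> S \<subseteq> R \<and> (\<forall>\<alpha>\<in>S. \<forall>\<beta>\<in>R. root_le n \<beta> \<alpha> \<longrightarrow> \<beta> \<in> S)"

text \<open>Signed permutations are functions on positions 1..n with values in +-{1..n}
  (value 0 outside 1..n); w acts by e_a \<mapsto> sgn(w a) e_|w a|.\<close>
definition act :: "nat \<Rightarrow> (nat \<Rightarrow> int) \<Rightarrow> (nat \<Rightarrow> int) \<Rightarrow> nat \<Rightarrow> int" where
  "act n w v = (\<lambda>j. \<Sum>a\<in>{1..n}. if nat \<bar>w a\<bar> = j then sgn (w a) * v a else 0)"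

definition Inv :: "nat \<Rightarrow> (nat \<Rightarrow> int) \<Rightarrow> root set" where
  "Inv n w = {\<alpha> \<in> posroots n. \<exists>\<beta>\<in>posroots n. act n w (rvec \<alpha>) = (\<lambda>j. - rvec \<beta> j)}"

text \<open>W^{OG(k,2n+1)}: w = (y_1..y_{k-r}, -z_r..-z_1, v_1..v_{n-k}).\<close>
definition W_OG :: "nat \<Rightarrow> nat \<Rightarrow> (nat \<Rightarrow> int) set" where
  "W_OG k n = {w. (\<forall>a. a \<notin> {1..n} \<longrightarrow> w a = 0)
     \<and> bij_betw (\<lambda>a. nat \<bar>w a\<bar>) {1..n} {1..n}
     \<and> (\<exists>r \<le> k.
          (\<forall>a\<in>{1..k-r}. w a > 0)
        \<and> (\<forall>a\<in>{k-r+1..k}. w a < 0)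
        \<and> (\<forall>a\<in>{k+1..n}. w a > 0)
        \<and> (\<forall>a b. 1 \<le> a \<and> a < b \<and> b \<le> k - r \<longrightarrow> w a < w b)
        \<and> (\<forall>a b. k - r + 1 \<le> a \<and> a < b \<and> b \<le> k \<longrightarrow> \<bar>w a\<bar> > \<bar>w b\<bar>)
        \<and> (\<forall>a b. k + 1 \<le> a \<and> a < b \<and> b \<le> n \<longrightarrow> w a < w b))}"

definition Y_OG :: "nat \<Rightarrow> nat \<Rightarrow> root set set" where
  "Y_OG k n = Inv n ` W_OG k n"

definition base_region :: "nat \<Rightarrow> nat \<Rightarrow> root set" where
  "base_region k n = {RMinus a b | a b. 1 \<le> a \<and> a \<le> k \<and> k < b \<and> b \<le> n}
                   \<union> {RPlus a b | a b. 1 \<le> a \<and> a \<le> k \<and> k < b \<and> b \<le> n}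
                   \<union> {RShort a | a. 1 \<le> a \<and> a \<le> k}"

definition base_row :: "nat \<Rightarrow> nat \<Rightarrow> nat \<Rightarrow> root set" where
  "base_row k n i = {RMinus (k+1-i) b | b. k < b \<and> b \<le> n}
                  \<union> {RPlus (k+1-i) b | b. k < b \<and> b \<le> n}
                  \<union> {RShort (k+1-i)}"

definition top_region :: "nat \<Rightarrow> root set" where
  "top_region k = {RPlus a b | a b. 1 \<le> a \<and> a < b \<and> b \<le> k}"

definition lam1 :: "nat \<Rightarrow> nat \<Rightarrow> root set \<Rightarrow> nat \<Rightarrow> nat" where
  "lam1 k n S i = card (S \<inter> base_row k n i)"

definition lam2 :: "nat \<Rightarrow> root set \<Rightarrow> nat \<Rightarrow> nat" where
  "lam2 k S i = card {a. 1 \<le> a \<and> a < k + 1 - i \<and> RPlus a (k+1-i) \<in> S}"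

definition f_k :: "nat \<Rightarrow> nat \<Rightarrow> root set \<Rightarrow> nat list" where
  "f_k k n S = map (\<lambda>i. lam1 k n S i + lam2 k S i) [1..<k+1]"

definition Theta :: "nat \<Rightarrow> nat \<Rightarrow> root set set" where
  "Theta k n = {S. S \<subseteq> base_region k n \<union> top_region k
     \<and> lower_ideal n (base_region k n) (S \<inter> base_region k n)
     \<and> lower_ideal n (top_region k) (S \<inter> top_region k)
     \<and> (\<forall>a b. RPlus a b \<in> top_region k \<longrightarrow>
          (card (S \<inter> (base_row k n (k+1-a) \<union> base_row k n (k+1-b))) > 2*n+1-2*k
              \<longrightarrow> RPlus a b \<in> S)
        \<and> (card (S \<inter> (base_row k n (k+1-a) \<union> base_row k n (k+1-b))) < 2*n+1-2*k
              \<longrightarrow> RPlus a b \<notin> S))}"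

text \<open>P(m,n) with m = n-k: partitions (gamma_1 \<ge> ... \<ge> gamma_k \<ge> 0) given as the list
  [gamma_1, ..., gamma_k], gamma_1 \<le> 2n-k = n+m, strict decrease where gamma_i > m.\<close>
definition P_part :: "nat \<Rightarrow> nat \<Rightarrow> nat list set" where
  "P_part m n = {\<gamma>. length \<gamma> = n - m
     \<and> (\<forall>i. Suc i < length \<gamma> \<longrightarrow> \<gamma>!i \<ge> \<gamma>!(Suc i))
     \<and> (\<forall>i < length \<gamma>. \<gamma>!i \<le> n + m)
     \<and> (\<forall>i. Suc i < length \<gamma> \<longrightarrow> \<gamma>!i > m \<longrightarrow> \<gamma>!i > \<gamma>!(Suc i))}"

end

theory Submission
  imports Defs
begin



definition psum :: "root \<Rightarrow> nat \<Rightarrow> int" where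
  "psum \<alpha> i = (\<Sum>j\<in>{1..i}. rvec \<alpha> j)"

lemma sum_unitv: "sum (unitv a) {1..i} = (if 1 \<le> a \<and> a \<le> i then 1 else 0)"
proof -
  have "sum (unitv a) {1..i} = (\<Sum>j\<in>{1..i}. if j = a then 1 else 0)" unfolding unitv_def by (rule refl)
  also have "\<dots> = (if 1 \<le> a \<and> a \<le> i then 1 else 0)" by (simp add: sum.delta')
  finally show ?thesis .
qed

lemma sum_unitv': "sum (unitv a) {Suc 0..i} = (if 1 \<le> a \<and> a \<le> i then 1 else 0)"
  using sum_unitv[of a i] by simp

lemma psum_simps[simp]:
  "psum (RMinus a b) i = (if 1 \<le> a \<and> a \<le> i then 1 else 0) - (if 1 \<le> b \<and> b \<le> i then 1 else 0)"
  "psum (RPlus a b) i = (if 1 \<le> a \<and> a \<le> i then 1 else 0) + (if 1 \<le> b \<and> b \<le> i then 1 else 0)"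
  "psum (RShort a) i = (if 1 \<le> a \<and> a \<le> i then 1 else 0)"
  by (simp_all add: psum_def sum.distrib sum_subtractf sum_unitv sum_unitv')

lemma simple_psum:
  assumes "l \<in> {1..n}" "i \<in> {1..n}"
  shows "sum (simple n l) {1..i} = (if l = i then 1 else 0)"
proof (cases "l < n")
  case True
  then show ?thesis using assms
    by (simp add: simple_def sum_subtractf sum_unitv sum_unitv')
next
  case False
  then show ?thesis using assms
    by (simp add: simple_def sum_unitv sum_unitv')
qed

lemma T_psum:
  assumes "i \<in> {1..n}"
  shows "(\<Sum>j\<in>{1..i}. \<Sum>l\<in>{1..n}. int (c l) * simple n l j) = int (c i)"
proof -
  have "(\<Sum>j\<in>{1..i}. \<Sum>l\<in>{1..n}. int (c l) * simple n l j)
      = (\<Sum>l\<in>{1..n}. int (c l) * (\<Sum>j\<in>{1..i}. simple n l j))"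
    by (subst sum.swap) (simp add: sum_distrib_left)
  also have "\<dots> = (\<Sum>l\<in>{1..n}. if l = i then int (c l) else 0)"
    by (rule sum.cong) (use assms simple_psum[of _ n i] in \<open>auto\<close>)
  also have "\<dots> = int (c i)" using assms by (simp add: sum.delta')
  finally show ?thesis .
qed

lemma T_supp:
  assumes "j \<notin> {1..n}"
  shows "(\<Sum>l\<in>{1..n}. int (c l) * simple n l j) = 0"
  by (rule sum.neutral) (use assms in \<open>auto simp: simple_def unitv_def\<close>)

lemma psum_eq_fun:
  fixes f g :: "nat \<Rightarrow> int"
  assumes "\<And>j. j \<notin> {1..n} \<Longrightarrow> f j = 0" "\<And>j. j \<notin> {1..n} \<Longrightarrow> g j = 0"
    and "\<And>i. i \<in> {1..n} \<Longrightarrow> (\<Sum>j\<in>{1..i}. f j) = (\<Sum>j\<in>{1..i}. g j)"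
  shows "f = g"
proof
  fix j
  show "f j = g j"
  proof (cases "j \<in> {1..n}")
    case False then show ?thesis using assms by simp
  next
    case True
    then obtain q where q: "j = Suc q" by (cases j) auto
    have s1: "(\<Sum>j\<in>{1..j}. f j) = (\<Sum>j\<in>{1..q}. f j) + f j"
      using q by (simp add: sum.cl_ivl_Suc)
    have s2: "(\<Sum>j\<in>{1..j}. g j) = (\<Sum>j\<in>{1..q}. g j) + g j"
      using q by (simp add: sum.cl_ivl_Suc)
    have s3: "(\<Sum>j\<in>{1..q}. f j) = (\<Sum>j\<in>{1..q}. g j)"
    proof (cases "q = 0")
      case True then show ?thesis by simp
    next
      case False then show ?thesis using True q assms(3)[of q] by auto
    qed
    show ?thesis using s1 s2 s3 assms(3)[OF True] by simp
  qed
qed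

lemma root_le_iff:
  assumes "\<And>j. j \<notin> {1..n} \<Longrightarrow> rvec \<alpha> j = 0" "\<And>j. j \<notin> {1..n} \<Longrightarrow> rvec \<beta> j = 0"
  shows "root_le n \<alpha> \<beta> \<longleftrightarrow> (\<forall>i\<in>{1..n}. psum \<alpha> i \<le> psum \<beta> i)"
proof
  assume "root_le n \<alpha> \<beta>"
  then obtain c where c: "(\<lambda>j. rvec \<beta> j - rvec \<alpha> j) = (\<lambda>j. \<Sum>i\<in>{1..n}. int (c i) * simple n i j)"
    unfolding root_le_def by blast
  show "\<forall>i\<in>{1..n}. psum \<alpha> i \<le> psum \<beta> i"
  proof
    fix i assume i: "i \<in> {1..n}"
    have "psum \<beta> i - psum \<alpha> i = (\<Sum>j\<in>{1..i}. rvec \<beta> j - rvec \<alpha> j)"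
      by (simp add: psum_def sum_subtractf)
    also have "\<dots> = (\<Sum>j\<in>{1..i}. \<Sum>l\<in>{1..n}. int (c l) * simple n l j)"
      using c by (metis (no_types, lifting))
    also have "\<dots> = int (c i)" using T_psum[OF i] .
    finally show "psum \<alpha> i \<le> psum \<beta> i" by simp
  qed
next
  assume H: "\<forall>i\<in>{1..n}. psum \<alpha> i \<le> psum \<beta> i"
  define c where "c l = nat (psum \<beta> l - psum \<alpha> l)" for l
  have "(\<lambda>j. rvec \<beta> j - rvec \<alpha> j) = (\<lambda>j. \<Sum>i\<in>{1..n}. int (c i) * simple n i j)"
  proof (rule psum_eq_fun[where n=n])
    fix j assume "j \<notin> {1..n}" then show "rvec \<beta> j - rvec \<alpha> j = 0" using assms by simp
  next
    fix j assume "j \<notin> {1..n}" then show "(\<Sum>i\<in>{1..n}. int (c i) * simple n i j) = 0" by (rule T_supp)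
  next
    fix i assume i: "i \<in> {1..n}"
    have "(\<Sum>j\<in>{1..i}. rvec \<beta> j - rvec \<alpha> j) = psum \<beta> i - psum \<alpha> i"
      by (simp add: psum_def sum_subtractf)
    also have "\<dots> = int (c i)" using H i by (simp add: c_def)
    finally show "(\<Sum>j\<in>{1..i}. rvec \<beta> j - rvec \<alpha> j) = (\<Sum>j\<in>{1..i}. \<Sum>l\<in>{1..n}. int (c l) * simple n l j)"
      using T_psum[OF i] by simp
  qed
  then show "root_le n \<alpha> \<beta>" unfolding root_le_def by blast
qed




definition broot :: "nat \<Rightarrow> nat \<Rightarrow> nat \<Rightarrow> nat \<Rightarrow> root" where
  "broot k n a p = (if p \<le> n-k then RMinus a (k+p) else if p = n-k+1 then RShort a
                    else RPlus a (2*n-k+2-p))"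

lemma rvec_supp:
  "1 \<le> a \<Longrightarrow> a \<le> n \<Longrightarrow> 1 \<le> b \<Longrightarrow> b \<le> n \<Longrightarrow> j \<notin> {1..n} \<Longrightarrow> rvec (RMinus a b) j = 0"
  "1 \<le> a \<Longrightarrow> a \<le> n \<Longrightarrow> 1 \<le> b \<Longrightarrow> b \<le> n \<Longrightarrow> j \<notin> {1..n} \<Longrightarrow> rvec (RPlus a b) j = 0"
  "1 \<le> a \<Longrightarrow> a \<le> n \<Longrightarrow> j \<notin> {1..n} \<Longrightarrow> rvec (RShort a) j = 0"
  by (auto simp: unitv_def)

lemma broot_supp:
  assumes "1 \<le> a" "a \<le> k" "1 \<le> p" "p \<le> 2*(n-k)+1" "k < n" "j \<notin> {1..n}"
  shows "rvec (broot k n a p) j = 0"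
  using assms by (auto simp: broot_def unitv_def)

lemma broot_psum:
  assumes "1 \<le> a" "a \<le> k" "1 \<le> p" "p \<le> 2*(n-k)+1" "k < n"
  shows "psum (broot k n a p) i = (if i < a then 0 else if p \<le> n-k then (if i < k+p then 1 else 0)
     else if p = n-k+1 then 1 else (if i < 2*n-k+2-p then 1 else 2))"
proof -
  consider "p \<le> n-k" | "p = n-k+1" | "p > n-k+1" by linarith
  then show ?thesis
  proof cases
    case 1 then show ?thesis using assms by (simp add: broot_def)
  next
    case 2 then show ?thesis using assms by (simp add: broot_def)
  next
    case 3
    have "1 \<le> 2*n-k+2-p" "2*n-k+2-p \<le> n" "a < 2*n-k+2-p" using 3 assms by linarith+
    then show ?thesis using assms 3 by (simp add: broot_def)
  qed
qed

lemma broot_psum_mono_p: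
  assumes "1 \<le> a" "a \<le> k" "1 \<le> p" "p \<le> 2*(n-k)+1" "1 \<le> p'" "p' \<le> p" "k < n"
  shows "psum (broot k n a p') i \<le> psum (broot k n a p) i"
proof -
  have p': "p' \<le> 2*(n-k)+1" using assms by linarith
  note e = broot_psum[OF assms(1-4,7)] broot_psum[OF assms(1,2,5) p' assms(7)]
  consider "i < a" | "i \<ge> a" "p \<le> n-k" | "i \<ge> a" "p = n-k+1" "p' \<le> n-k"
    | "i \<ge> a" "p = n-k+1" "p' = n-k+1" | "i \<ge> a" "p > n-k+1" "p' \<le> n-k"
    | "i \<ge> a" "p > n-k+1" "p' = n-k+1" | "i \<ge> a" "p > n-k+1" "p' > n-k+1" using assms by linarith
  then show ?thesis
  proof cases
    case 1 then show ?thesis unfolding e by simp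
  next
    case 2 then show ?thesis unfolding e using assms by simp
  next
    case 3 then show ?thesis unfolding e using assms by simp
  next
    case 4 then show ?thesis unfolding e using assms by simp
  next
    case 5 then show ?thesis unfolding e using assms by simp
  next
    case 6 then show ?thesis unfolding e using assms by simp
  next
    case 7
    have "2*n-k+2-p \<le> 2*n-k+2-p'" using assms by linarith
    then show ?thesis unfolding e using assms 7 by simp
  qed
qed



lemma broot_psum_mono_a:
  assumes "1 \<le> a" "a \<le> a'" "a' \<le> k" "1 \<le> p" "p \<le> 2*(n-k)+1" "k < n"
  shows "psum (broot k n a' p) i \<le> psum (broot k n a p) i"
proof -
  have a: "1 \<le> a'" "a \<le> k" using assms by linarith+
  note e = broot_psum[OF assms(1) a(2) assms(4,5,6)] broot_psum[OF a(1) assms(3,4,5,6)]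
  show ?thesis unfolding e using assms by auto
qed

lemma grid:
  assumes "1 \<le> a" "a \<le> k" "1 \<le> p" "p \<le> 2*(n-k)+1"
    "1 \<le> a'" "a' \<le> k" "1 \<le> p'" "p' \<le> 2*(n-k)+1" "k < n"
  shows "root_le n (broot k n a' p') (broot k n a p) \<longleftrightarrow> a \<le> a' \<and> p' \<le> p"
proof -
  have iff: "root_le n (broot k n a' p') (broot k n a p) \<longleftrightarrow>
     (\<forall>i\<in>{1..n}. psum (broot k n a' p') i \<le> psum (broot k n a p) i)"
    by (rule root_le_iff) (use assms broot_supp in auto)
  show ?thesis
  proof
    assume "root_le n (broot k n a' p') (broot k n a p)"
    then have H: "\<forall>i\<in>{1..n}. psum (broot k n a' p') i \<le> psum (broot k n a p) i" using iff by simp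
    have "a \<le> a'"
    proof (rule ccontr)
      assume "\<not> a \<le> a'"
      then show False using H[rule_format, of a'] assms
        by (simp add: broot_psum split: if_splits)
    qed
    moreover have "p' \<le> p"
    proof (rule ccontr)
      assume np: "\<not> p' \<le> p"
      consider "p \<le> n - k" | "p = n-k+1" | "p > n-k+1" by linarith
      then show False
      proof cases
        case 1
        have "psum (broot k n a p) (k+p) = 0" using 1 assms by (simp add: broot_psum)
        moreover have "psum (broot k n a' p') (k+p) \<ge> 1" using 1 assms np by (simp add: broot_psum)
        moreover have "k+p \<le> n" "1 \<le> k+p" using 1 assms by linarith+
        ultimately show False using H[rule_format, of "k+p"] by simp
      next
        case 2
        have "psum (broot k n a p) n = 1" using 2 assms by (simp add: broot_psum)
        moreover have "psum (broot k n a' p') n = 2" using 2 assms np by (simp add: broot_psum)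
        ultimately show False using H[rule_format, of "n"] 2 assms by simp
      next
        case 3
        define i where "i = 2*n-k+2-p'"
        have i: "1 \<le> i" "i \<le> n" "a \<le> i" "a' \<le> i" "i < 2*n-k+2-p" using 3 assms np unfolding i_def by linarith+
        have "psum (broot k n a p) i = 1" using 3 assms i by (simp add: broot_psum)
        moreover have "psum (broot k n a' p') i = 2" using 3 assms np i by (simp add: broot_psum i_def)
        ultimately show False using H[rule_format, of i] i by simp
      qed
    qed
    ultimately show "a \<le> a' \<and> p' \<le> p" by simp
  next
    assume le: "a \<le> a' \<and> p' \<le> p"
    have "\<forall>i\<in>{1..n}. psum (broot k n a' p') i \<le> psum (broot k n a p) i"
    proof
      fix i assume i: "i \<in> {1..n}"
      have "psum (broot k n a' p') i \<le> psum (broot k n a' p) i"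
        by (rule broot_psum_mono_p) (use assms le in auto)
      also have "\<dots> \<le> psum (broot k n a p) i"
        by (rule broot_psum_mono_a) (use assms le in auto)
      finally show "psum (broot k n a' p') i \<le> psum (broot k n a p) i" .
    qed
    then show "root_le n (broot k n a' p') (broot k n a p)" using iff by simp
  qed
qed

lemma top_le:
  assumes "1 \<le> a" "a < c" "c \<le> n" "1 \<le> a'" "a' < c'" "c' \<le> n"
  shows "root_le n (RPlus a' c') (RPlus a c) \<longleftrightarrow> a \<le> a' \<and> c \<le> c'"
proof -
  have iff: "root_le n (RPlus a' c') (RPlus a c) \<longleftrightarrow>
     (\<forall>i\<in>{1..n}. psum (RPlus a' c') i \<le> psum (RPlus a c) i)"
    by (rule root_le_iff) (use assms in \<open>auto simp: unitv_def\<close>)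
  show ?thesis
  proof
    assume "root_le n (RPlus a' c') (RPlus a c)"
    then have H: "\<forall>i\<in>{1..n}. psum (RPlus a' c') i \<le> psum (RPlus a c) i" using iff by simp
    have "a \<le> a'"
    proof (rule ccontr)
      assume "\<not> a \<le> a'"
      then have "psum (RPlus a' c') a' \<ge> 1" "psum (RPlus a c) a' = 0" using assms by auto
      then show False using H[rule_format, of a'] assms by auto
    qed
    moreover have "c \<le> c'"
    proof (rule ccontr)
      assume "\<not> c \<le> c'"
      then have "psum (RPlus a' c') c' = 2" "psum (RPlus a c) c' \<le> 1" using assms by auto
      then show False using H[rule_format, of c'] assms by auto
    qed
    ultimately show "a \<le> a' \<and> c \<le> c'" by simp
  next
    assume le: "a \<le> a' \<and> c \<le> c'"
    have "\<forall>i\<in>{1..n}. psum (RPlus a' c') i \<le> psum (RPlus a c) i"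
    proof
      fix i assume "i \<in> {1..n}"
      show "psum (RPlus a' c') i \<le> psum (RPlus a c) i" using le assms by simp
    qed
    then show "root_le n (RPlus a' c') (RPlus a c)" using iff by simp
  qed
qed




lemma broot_inj:
  assumes "1 \<le> p" "p \<le> 2*(n-k)+1" "1 \<le> p'" "p' \<le> 2*(n-k)+1" "k < n"
    and "broot k n a p = broot k n a' p'"
  shows "a = a' \<and> p = p'"
  using assms by (auto simp: broot_def split: if_splits; linarith)

lemma broot_in_base:
  assumes "1 \<le> a" "a \<le> k" "1 \<le> p" "p \<le> 2*(n-k)+1" "k < n"
  shows "broot k n a p \<in> base_region k n"
  using assms by (auto simp: broot_def base_region_def)

lemma base_is_broot:
  assumes "\<alpha> \<in> base_region k n" "k < n"
  shows "\<exists>a p. 1 \<le> a \<and> a \<le> k \<and> 1 \<le> p \<and> p \<le> 2*(n-k)+1 \<and> \<alpha> = broot k n a p"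
proof -
  consider (m) a b where "\<alpha> = RMinus a b" "1 \<le> a" "a \<le> k" "k < b" "b \<le> n"
    | (p) a b where "\<alpha> = RPlus a b" "1 \<le> a" "a \<le> k" "k < b" "b \<le> n"
    | (s) a where "\<alpha> = RShort a" "1 \<le> a" "a \<le> k"
    using assms(1) unfolding base_region_def by blast
  then show ?thesis
  proof cases
    case m
    then show ?thesis using assms
      by (intro exI[of _ a] exI[of _ "b-k"]) (auto simp: broot_def)
  next
    case p
    then show ?thesis using assms
      by (intro exI[of _ a] exI[of _ "2*n-k+2-b"]) (auto simp: broot_def)
  next
    case s
    then show ?thesis using assms
      by (intro exI[of _ a] exI[of _ "n-k+1"]) (auto simp: broot_def)
  qed
qed

lemma base_row_eq:
  assumes "1 \<le> i" "i \<le> k" "k < n"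
  shows "base_row k n i = broot k n (k+1-i) ` {1..2*(n-k)+1}"
proof
  show "base_row k n i \<subseteq> broot k n (k+1-i) ` {1..2*(n-k)+1}"
  proof
    fix \<alpha> assume "\<alpha> \<in> base_row k n i"
    then have "\<alpha> \<in> base_region k n" and ai: "\<exists>b. \<alpha> = RMinus (k+1-i) b \<or> \<alpha> = RPlus (k+1-i) b \<or> \<alpha> = RShort (k+1-i)"
      using assms unfolding base_row_def base_region_def by auto
    then obtain a p where ap: "1 \<le> a" "a \<le> k" "1 \<le> p" "p \<le> 2*(n-k)+1" "\<alpha> = broot k n a p"
      using base_is_broot assms by blast
    then have "a = k+1-i" using ai by (auto simp: broot_def split: if_splits)
    then show "\<alpha> \<in> broot k n (k+1-i) ` {1..2*(n-k)+1}" using ap by auto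
  qed
next
  show "broot k n (k+1-i) ` {1..2*(n-k)+1} \<subseteq> base_row k n i"
    using assms by (auto simp: broot_def base_row_def)
qed

lemma top_base_disj: "top_region k \<inter> base_region k n = {}"
  by (auto simp: top_region_def base_region_def)

definition lamS :: "nat \<Rightarrow> nat \<Rightarrow> root set \<Rightarrow> nat \<Rightarrow> nat" where
  "lamS k n S a = card {p \<in> {1..2*(n-k)+1}. broot k n a p \<in> S}"

definition U :: "root set \<Rightarrow> nat \<Rightarrow> nat set" where
  "U S c = {a. 1 \<le> a \<and> a < c \<and> RPlus a c \<in> S}"

lemma U_sub: "U S c \<subseteq> {1..<c}" by (auto simp: U_def)
lemma U_fin[simp]: "finite (U S c)" using U_sub finite_subset by blast

lemma card_row_inter:
  assumes "k < n"
  shows "card (S \<inter> broot k n a ` {1..2*(n-k)+1}) = lamS k n S a"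
proof -
  have "S \<inter> broot k n a ` {1..2*(n-k)+1} = broot k n a ` {p \<in> {1..2*(n-k)+1}. broot k n a p \<in> S}"
    by auto
  moreover have "inj_on (broot k n a) {p \<in> {1..2*(n-k)+1}. broot k n a p \<in> S}"
    by (rule inj_onI) (use broot_inj assms in auto)
  ultimately show ?thesis unfolding lamS_def by (simp add: card_image)
qed

lemma lam1_eq:
  assumes "1 \<le> i" "i \<le> k" "k < n"
  shows "lam1 k n S i = lamS k n S (k+1-i)"
  unfolding lam1_def base_row_eq[OF assms] using card_row_inter[OF assms(3)] .

lemma fk_length: "length (f_k k n S) = k"
  by (simp add: f_k_def)

lemma fk_nth:
  assumes "j < k" "k < n"
  shows "f_k k n S ! j = lamS k n S (k-j) + card (U S (k-j))"
proof -
  have "f_k k n S ! j = lam1 k n S (Suc j) + lam2 k S (Suc j)"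
    using assms by (simp add: f_k_def nth_map_upt del: upt_Suc)
  also have "lam1 k n S (Suc j) = lamS k n S (k-j)"
    using lam1_eq[of "Suc j" k n S] assms by simp
  also have "lam2 k S (Suc j) = card (U S (k-j))"
    using assms by (simp add: lam2_def U_def)
  finally show ?thesis .
qed

lemma downclosed_interval:
  fixes P :: "nat set"
  assumes "P \<subseteq> {1..N}" "\<And>p p'. p \<in> P \<Longrightarrow> 1 \<le> p' \<Longrightarrow> p' \<le> p \<Longrightarrow> p' \<in> P"
  shows "P = {1..card P}"
proof (cases "P = {}")
  case True then show ?thesis by simp
next
  case False
  have fin: "finite P" using assms(1) finite_subset by blast
  define M where "M = Max P"
  have "M \<in> P" using False fin M_def by simp
  have "P = {1..M}"
  proof
    show "P \<subseteq> {1..M}" using assms(1) fin M_def by auto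
    show "{1..M} \<subseteq> P" using assms(2) \<open>M \<in> P\<close> by auto
  qed
  then show ?thesis by simp
qed




lemma lam_le: "lamS k n S a \<le> 2*(n-k)+1"
proof -
  have "lamS k n S a \<le> card {1..2*(n-k)+1}"
    unfolding lamS_def by (rule card_mono) auto
  then show ?thesis by simp
qed

locale theta =
  fixes k n :: nat and S :: "root set"
  assumes k1: "1 \<le> k" and kn: "k < n" and th: "S \<in> Theta k n"
begin

lemma sub: "S \<subseteq> base_region k n \<union> top_region k"
  using th by (simp add: Theta_def)

lemma li_base: "lower_ideal n (base_region k n) (S \<inter> base_region k n)"
  using th by (simp add: Theta_def)

lemma li_top: "lower_ideal n (top_region k) (S \<inter> top_region k)"
  using th by (simp add: Theta_def)

lemma cond: "RPlus a b \<in> top_region k \<Longrightarrow>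
   (card (S \<inter> (base_row k n (k+1-a) \<union> base_row k n (k+1-b))) > 2*n+1-2*k \<longrightarrow> RPlus a b \<in> S)
 \<and> (card (S \<inter> (base_row k n (k+1-a) \<union> base_row k n (k+1-b))) < 2*n+1-2*k \<longrightarrow> RPlus a b \<notin> S)"
  using th by (simp add: Theta_def)

lemma memP:
  assumes "1 \<le> a" "a \<le> k"
  shows "{p \<in> {1..2*(n-k)+1}. broot k n a p \<in> S} = {1..lamS k n S a}"
  unfolding lamS_def
proof (rule downclosed_interval)
  show "{p \<in> {1..2*(n-k)+1}. broot k n a p \<in> S} \<subseteq> {1..2*(n-k)+1}" by auto
next
  fix p p' assume p: "p \<in> {p \<in> {1..2*(n-k)+1}. broot k n a p \<in> S}" and p': "1 \<le> p'" "p' \<le> p"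
  have le: "root_le n (broot k n a p') (broot k n a p)"
    using grid[of a k p n a p'] assms p p' kn by auto
  have "broot k n a p \<in> S \<inter> base_region k n" using p broot_in_base assms kn by auto
  moreover have "broot k n a p' \<in> base_region k n" using p p' broot_in_base assms kn by auto
  ultimately have "broot k n a p' \<in> S" using li_base le unfolding lower_ideal_def by blast
  then show "p' \<in> {p \<in> {1..2*(n-k)+1}. broot k n a p \<in> S}" using p p' by auto
qed

lemma bmem:
  assumes "1 \<le> a" "a \<le> k" "1 \<le> p" "p \<le> 2*(n-k)+1"
  shows "broot k n a p \<in> S \<longleftrightarrow> p \<le> lamS k n S a"
proof -
  have "broot k n a p \<in> S \<longleftrightarrow> p \<in> {p \<in> {1..2*(n-k)+1}. broot k n a p \<in> S}" using assms by auto
  also have "\<dots> \<longleftrightarrow> p \<le> lamS k n S a" unfolding memP[OF assms(1,2)] using assms by auto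
  finally show ?thesis .
qed

lemma lam_mono:
  assumes "1 \<le> a" "a \<le> a'" "a' \<le> k"
  shows "lamS k n S a \<le> lamS k n S a'"
proof (cases "lamS k n S a = 0")
  case True then show ?thesis by simp
next
  case False
  define p where "p = lamS k n S a"
  have p: "1 \<le> p" "p \<le> 2*(n-k)+1" using False lam_le p_def by (auto simp del: One_nat_def)
  have "broot k n a p \<in> S" using bmem[of a p] assms p p_def by auto
  moreover have "root_le n (broot k n a' p) (broot k n a p)"
    using grid[of a k p n a' p] assms p kn by auto
  moreover have "broot k n a' p \<in> base_region k n" using broot_in_base assms p kn by auto
  moreover have "broot k n a p \<in> base_region k n" using broot_in_base assms p kn by auto
  ultimately have "broot k n a' p \<in> S" using li_base unfolding lower_ideal_def by blast
  then show ?thesis using bmem[of a' p] assms p p_def by auto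
qed

lemma rowcard:
  assumes "1 \<le> a" "a < c" "c \<le> k"
  shows "card (S \<inter> (base_row k n (k+1-a) \<union> base_row k n (k+1-c))) = lamS k n S a + lamS k n S c"
proof -
  have ra: "base_row k n (k+1-a) = broot k n a ` {1..2*(n-k)+1}"
    using base_row_eq[of "k+1-a" k n] assms kn by simp
  have rc: "base_row k n (k+1-c) = broot k n c ` {1..2*(n-k)+1}"
    using base_row_eq[of "k+1-c" k n] assms kn by simp
  have disj: "(S \<inter> broot k n a ` {1..2*(n-k)+1}) \<inter> (S \<inter> broot k n c ` {1..2*(n-k)+1}) = {}"
    using broot_inj[of _ n k _ a c] assms kn by fastforce
  have "S \<inter> (base_row k n (k+1-a) \<union> base_row k n (k+1-c))
     = (S \<inter> broot k n a ` {1..2*(n-k)+1}) \<union> (S \<inter> broot k n c ` {1..2*(n-k)+1})"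
    unfolding ra rc by blast
  then show ?thesis using disj card_row_inter[OF kn] by (simp add: card_Un_disjoint)
qed

lemma top_mem: "1 \<le> a \<Longrightarrow> a < c \<Longrightarrow> c \<le> k \<Longrightarrow> RPlus a c \<in> top_region k"
  by (auto simp: top_region_def)

lemma U_in:
  assumes "1 \<le> a" "a < c" "c \<le> k" "lamS k n S a + lamS k n S c > 2*(n-k)+1"
  shows "a \<in> U S c"
proof -
  have "2*n+1-2*k = 2*(n-k)+1" using kn by simp
  then show ?thesis using cond[OF top_mem[OF assms(1-3)]] rowcard[OF assms(1-3)] assms
    by (auto simp: U_def)
qed

lemma U_out:
  assumes "1 \<le> a" "a < c" "c \<le> k" "lamS k n S a + lamS k n S c < 2*(n-k)+1"
  shows "a \<notin> U S c"
proof -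
  have "2*n+1-2*k = 2*(n-k)+1" using kn by simp
  then show ?thesis using cond[OF top_mem[OF assms(1-3)]] rowcard[OF assms(1-3)] assms
    by (auto simp: U_def)
qed

lemma top_down:
  assumes "RPlus a c \<in> S" "1 \<le> a" "a < c" "c \<le> k" "a \<le> a'" "a' < c'" "c \<le> c'" "c' \<le> k"
  shows "RPlus a' c' \<in> S"
proof -
  have "root_le n (RPlus a' c') (RPlus a c)" using top_le[of a c n a' c'] assms kn by auto
  moreover have "RPlus a c \<in> S \<inter> top_region k" using assms top_mem by auto
  moreover have "RPlus a' c' \<in> top_region k" using assms top_mem by auto
  ultimately show ?thesis using li_top unfolding lower_ideal_def by blast
qed

lemma U_up:
  assumes "c \<le> k" "a \<in> U S c" "a < a'" "a' < c"
  shows "a' \<in> U S c"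
  using top_down[of a c a' c] assms by (auto simp: U_def)

lemma U_mono:
  assumes "2 \<le> c" "c \<le> k"
  shows "U S (c-1) \<subseteq> U S c"
  using top_down[of _ "c-1" _ c] assms by (auto simp: U_def)

lemma U_empty:
  assumes "1 \<le> c" "c \<le> k" "lamS k n S c \<le> n-k"
  shows "U S c = {}"
proof -
  have "a \<notin> U S c" if "a \<in> U S c" for a
  proof -
    have a: "1 \<le> a" "a < c" using that by (auto simp: U_def)
    have "lamS k n S a \<le> lamS k n S c" using lam_mono a assms by simp
    then show ?thesis using U_out[of a c] a assms by simp
  qed
  then show ?thesis by blast
qed

lemma S_split: "\<alpha> \<in> S \<Longrightarrow> (\<exists>a p. 1 \<le> a \<and> a \<le> k \<and> 1 \<le> p \<and> p \<le> 2*(n-k)+1 \<and> \<alpha> = broot k n a p)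
    \<or> (\<exists>a c. 1 \<le> a \<and> a < c \<and> c \<le> k \<and> \<alpha> = RPlus a c)"
  using sub base_is_broot[OF _ kn] by (auto simp: top_region_def)

end




context theta begin

abbreviation G where "G c \<equiv> lamS k n S c + card (U S c)"

lemma Gmono:
  assumes "2 \<le> c" "c \<le> k"
  shows "G (c-1) \<le> G c"
proof -
  have "lamS k n S (c-1) \<le> lamS k n S c" using lam_mono assms by simp
  moreover have "card (U S (c-1)) \<le> card (U S c)" using U_mono[OF assms] by (simp add: card_mono)
  ultimately show ?thesis by simp
qed

lemma Gbound:
  assumes "1 \<le> c" "c \<le> k"
  shows "G c \<le> n + (n-k)"
proof -
  have "card (U S c) \<le> card {1..<c}" using U_sub by (rule card_mono[rotated]) simp
  then have "card (U S c) \<le> c - 1" by simp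
  moreover have "lamS k n S c \<le> 2*(n-k)+1" by (rule lam_le)
  ultimately show ?thesis using assms kn by linarith
qed


lemma Gstrict:
  assumes "2 \<le> c" "c \<le> k" "G c > n-k"
  shows "G (c-1) < G c"
proof (cases "lamS k n S c \<le> n-k")
  case True
  then have "U S c = {}" using U_empty assms by simp
  then show ?thesis using assms True by simp
next
  case False
  show ?thesis
  proof (cases "lamS k n S (c-1) \<le> n-k")
    case True
    then have "U S (c-1) = {}" using U_empty assms by simp
    then show ?thesis using False True by simp
  next
    case F2: False
    have "c-1 \<in> U S c" using U_in[of "c-1" c] assms False F2 by simp
    moreover have "c-1 \<notin> U S (c-1)" by (simp add: U_def)
    ultimately have "U S (c-1) \<subset> U S c" using U_mono[OF assms(1,2)] by blast
    then have "card (U S (c-1)) < card (U S c)" by (simp add: psubset_card_mono)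
    moreover have "lamS k n S (c-1) \<le> lamS k n S c" using lam_mono assms by simp
    ultimately show ?thesis by simp
  qed
qed


lemma in_P: "f_k k n S \<in> P_part (n-k) n"
proof -
  have len: "length (f_k k n S) = n - (n-k)" using fk_length kn by simp
  have nth: "f_k k n S ! j = G (k-j)" if "j < k" for j using fk_nth that kn by simp
  show ?thesis unfolding P_part_def
  proof (intro CollectI conjI allI impI)
    show "length (f_k k n S) = n - (n-k)" by (rule len)
  next
    fix i assume "Suc i < length (f_k k n S)"
    then have i: "Suc i < k" using fk_length by simp
    have e: "k - Suc i = k - i - 1" by arith
    have "G (k - i - 1) \<le> G (k-i)" using Gmono[of "k-i"] i by simp
    then show "f_k k n S ! Suc i \<le> f_k k n S ! i" using nth[of i] nth[of "Suc i"] i unfolding e by linarith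
  next
    fix i assume "i < length (f_k k n S)"
    then have i: "i < k" using fk_length by simp
    show "f_k k n S ! i \<le> n + (n-k)" using nth[of i] i Gbound[of "k-i"] by simp
  next
    fix i assume "Suc i < length (f_k k n S)" "n - k < f_k k n S ! i"
    then have i: "Suc i < k" and g: "n-k < G (k-i)" using fk_length nth[of i] by auto
    have e: "k - Suc i = k - i - 1" by arith
    have "G (k - i - 1) < G (k-i)" using Gstrict[of "k-i"] i g by simp
    then show "f_k k n S ! Suc i < f_k k n S ! i" using nth[of i] nth[of "Suc i"] i unfolding e by linarith
  qed
qed


end

lemma upclosed_card_eq:
  fixes A B :: "nat set"
  assumes "A \<subseteq> {1..<c}" "B \<subseteq> {1..<c}"
    and "\<And>a a'. a \<in> A \<Longrightarrow> a < a' \<Longrightarrow> a' < c \<Longrightarrow> a' \<in> A"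
    and "\<And>a a'. a \<in> B \<Longrightarrow> a < a' \<Longrightarrow> a' < c \<Longrightarrow> a' \<in> B"
    and "card A = card B"
  shows "A = B"
proof (rule ccontr)
  have fA: "finite A" "finite B" using assms(1,2) finite_subset by blast+
  assume "A \<noteq> B"
  then consider (1) x where "x \<in> A" "x \<notin> B" | (2) x where "x \<in> B" "x \<notin> A" by blast
  then show False
  proof cases
    case 1
    have "B \<subseteq> A"
    proof
      fix b assume b: "b \<in> B"
      have "x < b" using b 1 assms(4)[of b x] assms(1) by (cases "x < b"; cases "b < x"; auto simp: not_less) 
      then show "b \<in> A" using 1 assms(3) b assms(2) by auto
    qed
    then have "B \<subset> A" using 1 by blast
    from psubset_card_mono[OF fA(1) this] show False using assms(5) by simp
  next
    case 2
    have "A \<subseteq> B"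
    proof
      fix b assume b: "b \<in> A"
      have "x < b" using b 2 assms(3)[of b x] assms(2) by (cases "x < b"; cases "b < x"; auto simp: not_less)
      then show "b \<in> B" using 2 assms(4) b assms(1) by auto
    qed
    then have "A \<subset> B" using 2 by blast
    from psubset_card_mono[OF fA(2) this] show False using assms(5) by simp
  qed
qed


lemma theta_inj:
  assumes T: "theta k n S" and T': "theta k n S'" and eq: "f_k k n S = f_k k n S'"
  shows "S = S'"
proof -
  interpret A: theta k n S by (rule T)
  interpret B: theta k n S' by (rule T')
  have kn: "k < n" by (rule A.kn)
  have Geq: "A.G c = B.G c" if "1 \<le> c" "c \<le> k" for c
  proof -
    have "f_k k n S ! (k-c) = f_k k n S' ! (k-c)" using eq by simp
    then show ?thesis using fk_nth[of "k-c" k n] that kn by simp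
  qed
  have lam: "lamS k n S c = lamS k n S' c" if "1 \<le> c" "c \<le> k" for c
    using that
  proof (induction c rule: less_induct)
    case (less c)
    have IH: "lamS k n S a = lamS k n S' a" if "1 \<le> a" "a < c" for a
      using less.IH[of a] that less.prems by simp
    have one: False if lt: "lamS k n S1 c < lamS k n S2 c" and TT1: "theta k n S1" and TT2: "theta k n S2"
      and G12: "lamS k n S1 c + card (U S1 c) = lamS k n S2 c + card (U S2 c)"
      and IH12: "\<And>a. 1 \<le> a \<Longrightarrow> a < c \<Longrightarrow> lamS k n S1 a = lamS k n S2 a" for S1 S2
    proof -
      interpret X: theta k n S1 by (rule TT1)
      interpret Y: theta k n S2 by (rule TT2)
      have "card (U S2 c) < card (U S1 c)" using lt G12 by simp
      then have "\<not> U S1 c \<subseteq> U S2 c"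
      proof -
        assume cl: "card (U S2 c) < card (U S1 c)"
        show ?thesis
        proof
          assume "U S1 c \<subseteq> U S2 c"
          then have "card (U S1 c) \<le> card (U S2 c)" by (simp add: card_mono)
          then show False using cl by simp
        qed
      qed
      then obtain a where a: "a \<in> U S1 c" "a \<notin> U S2 c" by blast
      then have a1: "1 \<le> a" "a < c" by (auto simp: U_def)
      have "\<not> lamS k n S1 a + lamS k n S1 c < 2*(n-k)+1" using X.U_out[of a c] a a1 less.prems by auto
      moreover have "\<not> lamS k n S2 a + lamS k n S2 c > 2*(n-k)+1" using Y.U_in[of a c] a a1 less.prems by auto
      ultimately show False using IH12[OF a1] lt by simp
    qed
    have G: "lamS k n S c + card (U S c) = lamS k n S' c + card (U S' c)" using Geq less.prems by simp
    show ?case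
    proof (rule ccontr)
      assume "lamS k n S c \<noteq> lamS k n S' c"
      then consider "lamS k n S c < lamS k n S' c" | "lamS k n S' c < lamS k n S c" by linarith
      then show False
      proof cases
        case 1 then show False using one[OF 1 T T' G IH] by simp
      next
        case 2 then show False using one[OF 2 T' T G[symmetric]] IH by simp
      qed
    qed
  qed
  have Ueq: "U S c = U S' c" if "1 \<le> c" "c \<le> k" for c
  proof (rule upclosed_card_eq[of _ c])
    show "U S c \<subseteq> {1..<c}" "U S' c \<subseteq> {1..<c}" by (rule U_sub)+
    show "\<And>a a'. a \<in> U S c \<Longrightarrow> a < a' \<Longrightarrow> a' < c \<Longrightarrow> a' \<in> U S c" using A.U_up[OF that(2)] by blast
    show "\<And>a a'. a \<in> U S' c \<Longrightarrow> a < a' \<Longrightarrow> a' < c \<Longrightarrow> a' \<in> U S' c" using B.U_up[OF that(2)] by blast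
    show "card (U S c) = card (U S' c)" using Geq[OF that] lam[OF that] by simp
  qed
  have sub: "\<alpha> \<in> S'" if "\<alpha> \<in> S" "theta k n S" "theta k n S'"
      "\<And>c. 1 \<le> c \<Longrightarrow> c \<le> k \<Longrightarrow> lamS k n S c = lamS k n S' c"
      "\<And>c. 1 \<le> c \<Longrightarrow> c \<le> k \<Longrightarrow> U S c = U S' c" for \<alpha> S S'
  proof -
    interpret X: theta k n S by (rule that(2))
    interpret Y: theta k n S' by (rule that(3))
    from X.S_split[OF that(1)] show ?thesis
    proof
      assume "\<exists>a p. 1 \<le> a \<and> a \<le> k \<and> 1 \<le> p \<and> p \<le> 2*(n-k)+1 \<and> \<alpha> = broot k n a p"
      then obtain a p where ap: "1 \<le> a" "a \<le> k" "1 \<le> p" "p \<le> 2*(n-k)+1" "\<alpha> = broot k n a p" by blast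
      then show ?thesis using X.bmem Y.bmem that(1,4) by simp
    next
      assume "\<exists>a c. 1 \<le> a \<and> a < c \<and> c \<le> k \<and> \<alpha> = RPlus a c"
      then obtain a c where ac: "1 \<le> a" "a < c" "c \<le> k" "\<alpha> = RPlus a c" by blast
      then have "a \<in> U S c" using that(1) by (simp add: U_def)
      then have "a \<in> U S' c" using that(5)[of c] ac by simp
      then show ?thesis using ac by (simp add: U_def)
    qed
  qed
  show ?thesis
  proof
    show "S \<subseteq> S'" using sub[OF _ T T' lam Ueq] by blast
    show "S' \<subseteq> S" using sub[OF _ T' T lam[symmetric] Ueq[symmetric]] by blast
  qed
qed





lemma act_unitv:
  assumes "a0 \<in> {1..n}"
  shows "act n w (unitv a0) = (\<lambda>j. if nat \<bar>w a0\<bar> = j then sgn (w a0) else 0)"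
proof
  fix j
  have "act n w (unitv a0) j = (\<Sum>a\<in>{1..n}. if a = a0 then (if nat \<bar>w a0\<bar> = j then sgn (w a0) else 0) else 0)"
    unfolding act_def by (rule sum.cong) (auto simp: unitv_def)
  also have "\<dots> = (if nat \<bar>w a0\<bar> = j then sgn (w a0) else 0)" using assms by (simp add: sum.delta)
  finally show "act n w (unitv a0) j = (if nat \<bar>w a0\<bar> = j then sgn (w a0) else 0)" .
qed

lemma act_add: "act n w (\<lambda>j. f j + g j) = (\<lambda>j. act n w f j + act n w g j)"
proof
  fix j show "act n w (\<lambda>j. f j + g j) j = act n w f j + act n w g j"
    unfolding act_def by (simp add: sum.distrib[symmetric] distrib_left if_distrib cong: if_cong)
qed

lemma act_diff: "act n w (\<lambda>j. f j - g j) = (\<lambda>j. act n w f j - act n w g j)"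
proof
  fix j show "act n w (\<lambda>j. f j - g j) j = act n w f j - act n w g j"
    unfolding act_def by (simp add: sum_subtractf[symmetric] right_diff_distrib) (rule sum.cong, auto simp: right_diff_distrib)
qed

lemma act_RMinus:
  assumes "a \<in> {1..n}" "b \<in> {1..n}"
  shows "act n w (rvec (RMinus a b)) = (\<lambda>j. (if nat \<bar>w a\<bar> = j then sgn (w a) else 0) + (if nat \<bar>w b\<bar> = j then - sgn (w b) else 0))"
proof -
  have "rvec (RMinus a b) = (\<lambda>j. unitv a j - unitv b j)" by simp
  then show ?thesis using act_diff[of n w "unitv a" "unitv b"] act_unitv[OF assms(1)] act_unitv[OF assms(2)]
    by auto
qed

lemma act_RPlus:
  assumes "a \<in> {1..n}" "b \<in> {1..n}"
  shows "act n w (rvec (RPlus a b)) = (\<lambda>j. (if nat \<bar>w a\<bar> = j then sgn (w a) else 0) + (if nat \<bar>w b\<bar> = j then sgn (w b) else 0))"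
proof -
  have "rvec (RPlus a b) = (\<lambda>j. unitv a j + unitv b j)" by simp
  then show ?thesis using act_add[of n w "unitv a" "unitv b"] act_unitv[OF assms(1)] act_unitv[OF assms(2)]
    by auto
qed

lemma act_RShort:
  assumes "a \<in> {1..n}"
  shows "act n w (rvec (RShort a)) = (\<lambda>j. if nat \<bar>w a\<bar> = j then sgn (w a) else 0)"
  using act_unitv[OF assms] by simp

lemma negroot2:
  fixes s t :: int
  assumes "p \<noteq> q" "p \<in> {1..n}" "q \<in> {1..n}" "s = 1 \<or> s = -1" "t = 1 \<or> t = -1"
  shows "(\<exists>\<beta>\<in>posroots n. (\<lambda>j. (if p = j then s else 0) + (if q = j then t else 0)) = (\<lambda>j. - rvec \<beta> j))
     \<longleftrightarrow> (if p < q then s = -1 else t = -1)"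
proof
  assume "\<exists>\<beta>\<in>posroots n. (\<lambda>j. (if p = j then s else 0) + (if q = j then t else 0)) = (\<lambda>j. - rvec \<beta> j)"
  then obtain \<beta> where b: "\<beta> \<in> posroots n" and F: "(\<lambda>j. (if p = j then s else 0) + (if q = j then t else 0)) = (\<lambda>j. - rvec \<beta> j)"
    by blast
  have Fj: "(if p = j then s else 0) + (if q = j then t else 0) = - rvec \<beta> j" for j
    using fun_cong[OF F, of j] by simp
  from b consider (m) a c where "\<beta> = RMinus a c" "1 \<le> a" "a < c" "c \<le> n"
    | (pl) a c where "\<beta> = RPlus a c" "1 \<le> a" "a < c" "c \<le> n"
    | (s) a where "\<beta> = RShort a" "1 \<le> a" "a \<le> n"
    unfolding posroots_def by blast
  then show "if p < q then s = -1 else t = -1"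
  proof cases
    case m
    have 1: "(if p = a then s else 0) + (if q = a then t else 0) = -1" using Fj[of a] m by (simp add: unitv_def)
    have 2: "(if p = c then s else 0) + (if q = c then t else 0) = 1" using Fj[of c] m by (simp add: unitv_def)
    show ?thesis using 1 2 m assms by (auto split: if_splits)
  next
    case pl
    have 1: "(if p = a then s else 0) + (if q = a then t else 0) = -1" using Fj[of a] pl by (simp add: unitv_def)
    have 2: "(if p = c then s else 0) + (if q = c then t else 0) = -1" using Fj[of c] pl by (simp add: unitv_def)
    show ?thesis using 1 2 pl assms by (auto split: if_splits)
  next
    case s
    have 1: "s = - rvec \<beta> p" using Fj[of p] assms by simp
    have 2: "t = - rvec \<beta> q" using Fj[of q] assms by simp
    show ?thesis using 1 2 s assms by (auto simp: unitv_def split: if_splits)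
  qed
next
  assume H: "if p < q then s = -1 else t = -1"
  show "\<exists>\<beta>\<in>posroots n. (\<lambda>j. (if p = j then s else 0) + (if q = j then t else 0)) = (\<lambda>j. - rvec \<beta> j)"
  proof (cases "p < q")
    case True
    then have s: "s = -1" using H by simp
    show ?thesis
    proof (cases "t = 1")
      case True
      then show ?thesis using s \<open>p < q\<close> assms
        by (intro bexI[of _ "RMinus p q"]) (auto simp: unitv_def posroots_def)
    next
      case False
      then have "t = -1" using assms by simp
      then show ?thesis using s \<open>p < q\<close> assms
        by (intro bexI[of _ "RPlus p q"]) (auto simp: unitv_def posroots_def)
    qed
  next
    case False
    then have pq: "q < p" using assms by simp
    have t: "t = -1" using H False by simp
    show ?thesis
    proof (cases "s = 1")
      case True
      then show ?thesis using t pq assms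
        by (intro bexI[of _ "RMinus q p"]) (auto simp: unitv_def posroots_def)
    next
      case False
      then have "s = -1" using assms by simp
      then show ?thesis using t pq assms
        by (intro bexI[of _ "RPlus q p"]) (auto simp: unitv_def posroots_def)
    qed
  qed
qed

lemma neg1:
  fixes s :: int
  assumes "p \<in> {1..n}" "s = 1 \<or> s = -1"
  shows "(\<exists>\<beta>\<in>posroots n. (\<lambda>j. if p = j then s else 0) = (\<lambda>j. - rvec \<beta> j)) \<longleftrightarrow> s = -1"
proof
  assume "\<exists>\<beta>\<in>posroots n. (\<lambda>j. if p = j then s else 0) = (\<lambda>j. - rvec \<beta> j)"
  then obtain \<beta> where b: "\<beta> \<in> posroots n" and F: "(\<lambda>j. if p = j then s else 0) = (\<lambda>j. - rvec \<beta> j)"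
    by blast
  have Fj: "(if p = j then s else 0) = - rvec \<beta> j" for j
    using fun_cong[OF F, of j] by simp
  from b consider (m) a c where "\<beta> = RMinus a c" "1 \<le> a" "a < c" "c \<le> n"
    | (pl) a c where "\<beta> = RPlus a c" "1 \<le> a" "a < c" "c \<le> n"
    | (s) a where "\<beta> = RShort a" "1 \<le> a" "a \<le> n"
    unfolding posroots_def by blast
  then show "s = -1"
  proof cases
    case m
    have 1: "(if p = a then s else 0) = -1" using Fj[of a] m by (simp add: unitv_def)
    have 2: "(if p = c then s else 0) = 1" using Fj[of c] m by (simp add: unitv_def)
    show ?thesis using 1 2 m assms by (auto split: if_splits)
  next
    case pl
    have 1: "(if p = a then s else 0) = -1" using Fj[of a] pl by (simp add: unitv_def)
    show ?thesis using 1 by (auto split: if_splits)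
  next
    case s
    have 1: "(if p = a then s else 0) = -1" using Fj[of a] s by (simp add: unitv_def)
    show ?thesis using 1 by (auto split: if_splits)
  qed
next
  assume "s = -1"
  then show "\<exists>\<beta>\<in>posroots n. (\<lambda>j. if p = j then s else 0) = (\<lambda>j. - rvec \<beta> j)"
    using assms by (intro bexI[of _ "RShort p"]) (auto simp: unitv_def posroots_def)
qed




locale wperm =
  fixes k n :: nat and w :: "nat \<Rightarrow> int" and r :: nat
  assumes k1: "1 \<le> k" and kn: "k < n"
    and zero: "\<forall>a. a \<notin> {1..n} \<longrightarrow> w a = 0"
    and bij: "bij_betw (\<lambda>a. nat \<bar>w a\<bar>) {1..n} {1..n}"
    and rk: "r \<le> k"
    and pos1: "\<forall>a\<in>{1..k-r}. w a > 0"
    and neg2: "\<forall>a\<in>{k-r+1..k}. w a < 0"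
    and pos3: "\<forall>a\<in>{k+1..n}. w a > 0"
    and inc1: "\<forall>a b. 1 \<le> a \<and> a < b \<and> b \<le> k - r \<longrightarrow> w a < w b"
    and dec2: "\<forall>a b. k - r + 1 \<le> a \<and> a < b \<and> b \<le> k \<longrightarrow> \<bar>w a\<bar> > \<bar>w b\<bar>"
    and inc3: "\<forall>a b. k + 1 \<le> a \<and> a < b \<and> b \<le> n \<longrightarrow> w a < w b"

lemma W_OG_wperm:
  assumes "w \<in> W_OG k n" "1 \<le> k" "k < n"
  shows "\<exists>r. wperm k n w r"
  using assms unfolding W_OG_def wperm_def by blast

lemma wperm_W_OG:
  assumes "wperm k n w r"
  shows "w \<in> W_OG k n"
  using assms unfolding W_OG_def wperm_def by blast

context wperm begin

lemma sign_cases: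
  assumes "a \<in> {1..n}"
  shows "(w a < 0 \<longleftrightarrow> k - r < a \<and> a \<le> k) \<and> (w a > 0 \<longleftrightarrow> \<not> (k - r < a \<and> a \<le> k))"
proof -
  consider "a \<le> k - r" | "k - r < a \<and> a \<le> k" | "k < a" by linarith
  then show ?thesis
  proof cases
    case 1 then have "w a > 0" using pos1 assms by auto
    then show ?thesis using 1 by auto
  next
    case 2 then have "w a < 0" using neg2 assms by auto
    then show ?thesis using 2 by auto
  next
    case 3 then have "w a > 0" using pos3 assms by auto
    then show ?thesis using 3 by auto
  qed
qed

lemma nz: "a \<in> {1..n} \<Longrightarrow> w a \<noteq> 0"
  using sign_cases[of a] by auto

lemma absrange: "a \<in> {1..n} \<Longrightarrow> 1 \<le> \<bar>w a\<bar> \<and> \<bar>w a\<bar> \<le> int n"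
proof -
  assume a: "a \<in> {1..n}"
  have "nat \<bar>w a\<bar> \<in> {1..n}" using bij a unfolding bij_betw_def by auto
  then show ?thesis by auto
qed

lemma absrange_nat: "a \<in> {1..n} \<Longrightarrow> nat \<bar>w a\<bar> \<in> {1..n}"
  using bij unfolding bij_betw_def by auto

lemma absinj: "a \<in> {1..n} \<Longrightarrow> b \<in> {1..n} \<Longrightarrow> a \<noteq> b \<Longrightarrow> \<bar>w a\<bar> \<noteq> \<bar>w b\<bar>"
proof -
  assume ab: "a \<in> {1..n}" "b \<in> {1..n}" "a \<noteq> b"
  have "nat \<bar>w a\<bar> \<noteq> nat \<bar>w b\<bar>" using bij ab unfolding bij_betw_def inj_on_def by blast
  then show ?thesis by auto
qed

lemma sgn_cases: "a \<in> {1..n} \<Longrightarrow> sgn (w a) = 1 \<or> sgn (w a) = -1"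
  using nz[of a] by (auto simp: sgn_if)

lemma invM:
  assumes "1 \<le> a" "a < b" "b \<le> n"
  shows "RMinus a b \<in> Inv n w \<longleftrightarrow> (if \<bar>w a\<bar> < \<bar>w b\<bar> then w a < 0 else w b > 0)"
proof -
  have ab: "a \<in> {1..n}" "b \<in> {1..n}" using assms by auto
  have pq: "nat \<bar>w a\<bar> \<noteq> nat \<bar>w b\<bar>" using absinj[OF ab] assms by auto
  have "RMinus a b \<in> posroots n" using assms by (auto simp: posroots_def)
  then have "RMinus a b \<in> Inv n w \<longleftrightarrow>
    (\<exists>\<beta>\<in>posroots n. (\<lambda>j. (if nat \<bar>w a\<bar> = j then sgn (w a) else 0) + (if nat \<bar>w b\<bar> = j then - sgn (w b) else 0)) = (\<lambda>j. - rvec \<beta> j))"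
    unfolding Inv_def mem_Collect_eq act_RMinus[OF ab] by simp
  also have "\<dots> \<longleftrightarrow> (if nat \<bar>w a\<bar> < nat \<bar>w b\<bar> then sgn (w a) = -1 else - sgn (w b) = -1)"
    by (rule negroot2) (use pq absrange_nat[OF ab(1)] absrange_nat[OF ab(2)] sgn_cases[OF ab(1)] sgn_cases[OF ab(2)] in auto)
  also have "\<dots> \<longleftrightarrow> (if \<bar>w a\<bar> < \<bar>w b\<bar> then w a < 0 else w b > 0)"
    by (auto simp: sgn_if)
  finally show ?thesis .
qed

lemma invP:
  assumes "1 \<le> a" "a < b" "b \<le> n"
  shows "RPlus a b \<in> Inv n w \<longleftrightarrow> (if \<bar>w a\<bar> < \<bar>w b\<bar> then w a < 0 else w b < 0)"
proof -
  have ab: "a \<in> {1..n}" "b \<in> {1..n}" using assms by auto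
  have pq: "nat \<bar>w a\<bar> \<noteq> nat \<bar>w b\<bar>" using absinj[OF ab] assms by auto
  have "RPlus a b \<in> posroots n" using assms by (auto simp: posroots_def)
  then have "RPlus a b \<in> Inv n w \<longleftrightarrow>
    (\<exists>\<beta>\<in>posroots n. (\<lambda>j. (if nat \<bar>w a\<bar> = j then sgn (w a) else 0) + (if nat \<bar>w b\<bar> = j then sgn (w b) else 0)) = (\<lambda>j. - rvec \<beta> j))"
    unfolding Inv_def mem_Collect_eq act_RPlus[OF ab] by simp
  also have "\<dots> \<longleftrightarrow> (if nat \<bar>w a\<bar> < nat \<bar>w b\<bar> then sgn (w a) = -1 else sgn (w b) = -1)"
    by (rule negroot2) (use pq absrange_nat[OF ab(1)] absrange_nat[OF ab(2)] sgn_cases[OF ab(1)] sgn_cases[OF ab(2)] in auto)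
  also have "\<dots> \<longleftrightarrow> (if \<bar>w a\<bar> < \<bar>w b\<bar> then w a < 0 else w b < 0)"
    by (auto simp: sgn_if)
  finally show ?thesis .
qed

lemma invS:
  assumes "1 \<le> a" "a \<le> n"
  shows "RShort a \<in> Inv n w \<longleftrightarrow> w a < 0"
proof -
  have ab: "a \<in> {1..n}" using assms by auto
  have "RShort a \<in> posroots n" using assms by (auto simp: posroots_def)
  then have "RShort a \<in> Inv n w \<longleftrightarrow>
    (\<exists>\<beta>\<in>posroots n. (\<lambda>j. if nat \<bar>w a\<bar> = j then sgn (w a) else 0) = (\<lambda>j. - rvec \<beta> j))"
    unfolding Inv_def mem_Collect_eq act_RShort[OF ab] by simp
  also have "\<dots> \<longleftrightarrow> sgn (w a) = -1"
    by (rule neg1) (use absrange_nat[OF ab] sgn_cases[OF ab] in auto)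
  also have "\<dots> \<longleftrightarrow> w a < 0" by (auto simp: sgn_if)
  finally show ?thesis .
qed

end




context wperm begin

lemma mono3: "k + 1 \<le> a \<Longrightarrow> a \<le> b \<Longrightarrow> b \<le> n \<Longrightarrow> w a \<le> w b"
  using inc3 by (cases "a = b") (auto, meson le_neq_implies_less less_imp_le)

lemma initseg:
  assumes "1 \<le> p" "p \<le> n - k"
  shows "p \<le> card {b \<in> {k+1..n}. w b < t} \<longleftrightarrow> w (k+p) < t"
proof
  assume H: "p \<le> card {b \<in> {k+1..n}. w b < t}"
  show "w (k+p) < t"
  proof (rule ccontr)
    assume "\<not> w (k+p) < t"
    then have le: "t \<le> w (k+p)" by simp
    have "{b \<in> {k+1..n}. w b < t} \<subseteq> {k+1..<k+p}"
    proof
      fix x assume x: "x \<in> {b \<in> {k+1..n}. w b < t}"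
      have "\<not> k+p \<le> x"
      proof
        assume "k+p \<le> x"
        then have "w (k+p) \<le> w x" using mono3[of "k+p" x] x assms by auto
        then show False using x le by auto
      qed
      then show "x \<in> {k+1..<k+p}" using x by auto
    qed
    then have "card {b \<in> {k+1..n}. w b < t} \<le> card {k+1..<k+p}" by (rule card_mono[rotated]) simp
    then show False using H assms by simp
  qed
next
  assume H: "w (k+p) < t"
  have "{k+1..k+p} \<subseteq> {b \<in> {k+1..n}. w b < t}"
  proof
    fix x assume x: "x \<in> {k+1..k+p}"
    then have "w x \<le> w (k+p)" using mono3[of x "k+p"] assms by auto
    then show "x \<in> {b \<in> {k+1..n}. w b < t}" using H x assms by auto
  qed
  then have "card {k+1..k+p} \<le> card {b \<in> {k+1..n}. w b < t}" by (rule card_mono[rotated]) simp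
  then show "p \<le> card {b \<in> {k+1..n}. w b < t}" by simp
qed

lemma finalseg:
  assumes "1 \<le> q" "q \<le> n - k"
  shows "q \<le> card {b \<in> {k+1..n}. w b > t} \<longleftrightarrow> w (n+1-q) > t"
proof
  assume H: "q \<le> card {b \<in> {k+1..n}. w b > t}"
  show "w (n+1-q) > t"
  proof (rule ccontr)
    assume "\<not> w (n+1-q) > t"
    then have le: "w (n+1-q) \<le> t" by simp
    have "{b \<in> {k+1..n}. w b > t} \<subseteq> {n+2-q..n}"
    proof
      fix x assume x: "x \<in> {b \<in> {k+1..n}. w b > t}"
      have "\<not> x \<le> n+1-q"
      proof
        assume "x \<le> n+1-q"
        then have "w x \<le> w (n+1-q)" using mono3[of x "n+1-q"] x assms by auto
        then show False using x le by auto
      qed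
      then show "x \<in> {n+2-q..n}" using x by auto
    qed
    then have "card {b \<in> {k+1..n}. w b > t} \<le> card {n+2-q..n}" by (rule card_mono[rotated]) simp
    then show False using H assms by simp
  qed
next
  assume H: "w (n+1-q) > t"
  have "{n+1-q..n} \<subseteq> {b \<in> {k+1..n}. w b > t}"
  proof
    fix x assume x: "x \<in> {n+1-q..n}"
    then have "w (n+1-q) \<le> w x" using mono3[of "n+1-q" x] assms by auto
    then show "x \<in> {b \<in> {k+1..n}. w b > t}" using H x assms by auto
  qed
  then have "card {n+1-q..n} \<le> card {b \<in> {k+1..n}. w b > t}" by (rule card_mono[rotated]) simp
  then show "q \<le> card {b \<in> {k+1..n}. w b > t}" using assms by simp
qed

lemma card_seg_le: "card {b \<in> {k+1..n}. P b} \<le> n - k"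
proof -
  have "card {b \<in> {k+1..n}. P b} \<le> card {k+1..n}" by (rule card_mono) auto
  then show ?thesis by simp
qed

definition lamw :: "nat \<Rightarrow> nat" where
  "lamw a = (if w a > 0 then card {b \<in> {k+1..n}. w b < w a} else n-k+1 + card {b \<in> {k+1..n}. w b > - w a})"

lemma lamw_le: "lamw a \<le> 2*(n-k)+1"
  using card_seg_le[of "\<lambda>b. w b < w a"] card_seg_le[of "\<lambda>b. w b > - w a"] by (simp add: lamw_def)

lemma bmemw:
  assumes "1 \<le> a" "a \<le> k" "1 \<le> p" "p \<le> 2*(n-k)+1"
  shows "broot k n a p \<in> Inv n w \<longleftrightarrow> p \<le> lamw a"
proof -
  have aa: "a \<in> {1..n}" using assms kn by auto
  consider "p \<le> n-k" | "p = n-k+1" | "p > n-k+1" by linarith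
  then show ?thesis
  proof cases
    case 1
    have b: "k+p \<in> {1..n}" "w (k+p) > 0" using 1 assms pos3 kn by auto
    have ne: "\<bar>w a\<bar> \<noteq> \<bar>w (k+p)\<bar>" using absinj[OF aa b(1)] assms by simp
    have "broot k n a p \<in> Inv n w \<longleftrightarrow> (if \<bar>w a\<bar> < \<bar>w (k+p)\<bar> then w a < 0 else w (k+p) > 0)"
      using invM[of a "k+p"] 1 assms kn by (simp add: broot_def)
    also have "\<dots> \<longleftrightarrow> w a < 0 \<or> w (k+p) < w a" using b ne by auto
    also have "\<dots> \<longleftrightarrow> p \<le> lamw a"
    proof (cases "w a > 0")
      case True
      then show ?thesis using initseg[of p "w a"] 1 assms by (simp add: lamw_def)
    next
      case False
      then have "w a < 0" using nz[OF aa] by simp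
      then show ?thesis using 1 by (simp add: lamw_def)
    qed
    finally show ?thesis .
  next
    case 2
    have "broot k n a p \<in> Inv n w \<longleftrightarrow> w a < 0" using invS[of a] 2 assms kn by (simp add: broot_def)
    also have "\<dots> \<longleftrightarrow> p \<le> lamw a"
    proof (cases "w a > 0")
      case True
      then show ?thesis using 2 card_seg_le[of "\<lambda>b. w b < w a"] by (simp add: lamw_def)
    next
      case False
      then have "w a < 0" using nz[OF aa] by simp
      then show ?thesis using 2 by (simp add: lamw_def)
    qed
    finally show ?thesis .
  next
    case 3
    define b where "b = 2*n-k+2-p"
    have bb: "k+1 \<le> b" "b \<le> n" "a < b" using 3 assms kn unfolding b_def by linarith+
    have b: "b \<in> {1..n}" "w b > 0" using bb pos3 by auto
    have ne: "\<bar>w a\<bar> \<noteq> \<bar>w b\<bar>" using absinj[OF aa b(1)] bb by simp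
    have "broot k n a p = RPlus a b" using 3 unfolding broot_def b_def by simp
    then have "broot k n a p \<in> Inv n w \<longleftrightarrow> (if \<bar>w a\<bar> < \<bar>w b\<bar> then w a < 0 else w b < 0)"
      using invP[of a b] bb assms by simp
    also have "\<dots> \<longleftrightarrow> w a < 0 \<and> - w a < w b" using b ne by auto
    also have "\<dots> \<longleftrightarrow> p \<le> lamw a"
    proof (cases "w a > 0")
      case True
      then show ?thesis using 3 card_seg_le[of "\<lambda>b. w b < w a"] by (simp add: lamw_def)
    next
      case False
      then have neg: "w a < 0" using nz[OF aa] by simp
      define q where "q = p - (n-k+1)"
      have q: "1 \<le> q" "q \<le> n-k" "n+1-q = b" using 3 assms kn unfolding q_def b_def by linarith+
      have "- w a < w b \<longleftrightarrow> q \<le> card {b \<in> {k+1..n}. w b > - w a}"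
        using finalseg[OF q(1,2), of "- w a"] q(3) by simp
      also have "\<dots> \<longleftrightarrow> p \<le> lamw a" using neg q_def 3 by (auto simp: lamw_def)
      finally show ?thesis using neg by simp
    qed
    finally show ?thesis .
  qed
qed

lemma lamw_pos_le: "w a > 0 \<Longrightarrow> lamw a \<le> n - k"
  using card_seg_le[of "\<lambda>b. w b < w a"] by (simp add: lamw_def)

lemma lamw_neg_ge: "w a < 0 \<Longrightarrow> lamw a \<ge> n - k + 1"
  by (simp add: lamw_def)

lemma lamw_mono:
  assumes "1 \<le> a" "a \<le> a'" "a' \<le> k"
  shows "lamw a \<le> lamw a'"
proof -
  have aa: "a \<in> {1..n}" "a' \<in> {1..n}" using assms kn by auto
  show ?thesis
  proof (cases "w a' > 0")
    case True
    then have a'r: "a' \<le> k - r" using sign_cases[OF aa(2)] assms by auto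
    then have pa: "w a > 0" using pos1 assms by auto
    have "w a \<le> w a'"
    proof (cases "a = a'")
      case False
      then have "a < a'" using assms by simp
      then have "w a < w a'" using inc1 assms a'r by auto
      then show ?thesis by simp
    qed simp
    then have "{b \<in> {k+1..n}. w b < w a} \<subseteq> {b \<in> {k+1..n}. w b < w a'}" by auto
    then have "card {b \<in> {k+1..n}. w b < w a} \<le> card {b \<in> {k+1..n}. w b < w a'}"
      by (rule card_mono[rotated]) simp
    then show ?thesis using True pa unfolding lamw_def by simp
  next
    case False
    then have na': "w a' < 0" using nz[OF aa(2)] by simp
    show ?thesis
    proof (cases "w a > 0")
      case True then show ?thesis using lamw_pos_le[of a] lamw_neg_ge[of a'] na' by linarith
    next
      case False
      then have na: "w a < 0" using nz[OF aa(1)] by simp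
      have ar: "k - r < a" using sign_cases[OF aa(1)] na by auto
      have "\<bar>w a'\<bar> \<le> \<bar>w a\<bar>"
      proof (cases "a = a'")
        case False
        then have "a < a'" using assms by simp
        then have "\<bar>w a\<bar> > \<bar>w a'\<bar>" using dec2 assms ar by auto
        then show ?thesis by simp
      qed simp
      then have "- w a' \<le> - w a" using na na' by simp
      then have "{b \<in> {k+1..n}. w b > - w a} \<subseteq> {b \<in> {k+1..n}. w b > - w a'}" by auto
      then have "card {b \<in> {k+1..n}. w b > - w a} \<le> card {b \<in> {k+1..n}. w b > - w a'}"
        by (rule card_mono[rotated]) simp
      then show ?thesis using na na' unfolding lamw_def by simp
    qed
  qed
qed

end




lemma rowcard_gen:
  assumes "1 \<le> a" "a < c" "c \<le> k" "k < n"
  shows "card (S \<inter> (base_row k n (k+1-a) \<union> base_row k n (k+1-c))) = lamS k n S a + lamS k n S c"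
proof -
  have ra: "base_row k n (k+1-a) = broot k n a ` {1..2*(n-k)+1}"
    using base_row_eq[of "k+1-a" k n] assms by simp
  have rc: "base_row k n (k+1-c) = broot k n c ` {1..2*(n-k)+1}"
    using base_row_eq[of "k+1-c" k n] assms by simp
  have disj: "(S \<inter> broot k n a ` {1..2*(n-k)+1}) \<inter> (S \<inter> broot k n c ` {1..2*(n-k)+1}) = {}"
    using broot_inj[of _ n k _ a c] assms by fastforce
  have "S \<inter> (base_row k n (k+1-a) \<union> base_row k n (k+1-c))
     = (S \<inter> broot k n a ` {1..2*(n-k)+1}) \<union> (S \<inter> broot k n c ` {1..2*(n-k)+1})"
    unfolding ra rc by blast
  then show ?thesis using disj card_row_inter[OF assms(4)] by (simp add: card_Un_disjoint)
qed

lemma lam_ideal: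
  assumes "T \<subseteq> base_region k n" "k < n"
    and mem: "\<And>a p. 1 \<le> a \<Longrightarrow> a \<le> k \<Longrightarrow> 1 \<le> p \<Longrightarrow> p \<le> 2*(n-k)+1 \<Longrightarrow> broot k n a p \<in> T \<longleftrightarrow> p \<le> lam a"
    and mono: "\<And>a a'. 1 \<le> a \<Longrightarrow> a \<le> a' \<Longrightarrow> a' \<le> k \<Longrightarrow> lam a \<le> lam a'"
  shows "lower_ideal n (base_region k n) T"
  unfolding lower_ideal_def
proof (intro conjI ballI impI)
  show "T \<subseteq> base_region k n" by (rule assms(1))
next
  fix \<alpha> \<beta> assume a: "\<alpha> \<in> T" and b: "\<beta> \<in> base_region k n" and le: "root_le n \<beta> \<alpha>"
  obtain a p where ap: "1 \<le> a" "a \<le> k" "1 \<le> p" "p \<le> 2*(n-k)+1" "\<alpha> = broot k n a p"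
    using base_is_broot[OF _ assms(2)] a assms(1) by blast
  obtain a' p' where ap': "1 \<le> a'" "a' \<le> k" "1 \<le> p'" "p' \<le> 2*(n-k)+1" "\<beta> = broot k n a' p'"
    using base_is_broot[OF b assms(2)] by blast
  have "a \<le> a' \<and> p' \<le> p" using grid[of a k p n a' p'] ap ap' le assms(2) by simp
  moreover have "p \<le> lam a" using mem[OF ap(1-4)] a ap(5) by simp
  ultimately have "p' \<le> lam a'" using mono[of a a'] ap ap' by simp
  then show "\<beta> \<in> T" using mem[OF ap'(1-4)] ap'(5) by simp
qed

context wperm begin

lemma inc1': "1 \<le> a \<Longrightarrow> a < b \<Longrightarrow> b \<le> k - r \<Longrightarrow> w a < w b" using inc1 by blast
lemma dec2': "k - r + 1 \<le> a \<Longrightarrow> a < b \<Longrightarrow> b \<le> k \<Longrightarrow> \<bar>w a\<bar> > \<bar>w b\<bar>" using dec2 by blast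
lemma inc3': "k + 1 \<le> a \<Longrightarrow> a < b \<Longrightarrow> b \<le> n \<Longrightarrow> w a < w b" using inc3 by blast

lemma topchar:
  assumes "1 \<le> a" "a < c" "c \<le> k"
  shows "RPlus a c \<in> Inv n w \<longleftrightarrow> (w c < 0 \<and> \<bar>w a\<bar> > \<bar>w c\<bar>)"
proof -
  have ac: "a \<in> {1..n}" "c \<in> {1..n}" using assms kn by auto
  have ne: "\<bar>w a\<bar> \<noteq> \<bar>w c\<bar>" using absinj[OF ac] assms by simp
  have e: "RPlus a c \<in> Inv n w \<longleftrightarrow> (if \<bar>w a\<bar> < \<bar>w c\<bar> then w a < 0 else w c < 0)"
    using invP[of a c] assms kn by simp
  show ?thesis
  proof (cases "w a < 0")
    case True
    then have ar: "k - r < a" using sign_cases[OF ac(1)] by auto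
    then have "w c < 0" using sign_cases[OF ac(2)] assms by auto
    moreover have "\<bar>w a\<bar> > \<bar>w c\<bar>" using dec2'[of a c] ar assms by simp
    ultimately show ?thesis using e by simp
  next
    case False
    then show ?thesis using e ne by auto
  qed
qed

lemma Inv_sub: "Inv n w \<subseteq> base_region k n \<union> top_region k"
proof
  fix \<alpha> assume a: "\<alpha> \<in> Inv n w"
  then have "\<alpha> \<in> posroots n" by (simp add: Inv_def)
  then consider (m) a b where "\<alpha> = RMinus a b" "1 \<le> a" "a < b" "b \<le> n"
    | (pl) a b where "\<alpha> = RPlus a b" "1 \<le> a" "a < b" "b \<le> n"
    | (s) a where "\<alpha> = RShort a" "1 \<le> a" "a \<le> n"
    unfolding posroots_def by blast
  then show "\<alpha> \<in> base_region k n \<union> top_region k"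
  proof cases
    case m
    have ab: "a \<in> {1..n}" "b \<in> {1..n}" using m by auto
    have inv: "if \<bar>w a\<bar> < \<bar>w b\<bar> then w a < 0 else w b > 0" using invM[of a b] m a by simp
    consider "a \<le> k" "k < b" | "b \<le> k" | "k < a" using m by linarith
    then show ?thesis
    proof cases
      case 1 then show ?thesis using m by (auto simp: base_region_def)
    next
      case 2
      have False
      proof (cases "b \<le> k - r")
        case True
        then have "w a < w b" "w a > 0" using inc1'[of a b] pos1 m by auto
        then show False using inv by auto
      next
        case False
        then have wb: "w b < 0" using sign_cases[OF ab(2)] 2 by auto
        show False
        proof (cases "a \<le> k - r")
          case True
          then have "w a > 0" using pos1 m by auto
          then show False using inv wb by (auto split: if_splits)
        next
          case False
          then have "\<bar>w a\<bar> > \<bar>w b\<bar>" using dec2'[of a b] m 2 by simp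
          then show False using inv wb by auto
        qed
      qed
      then show ?thesis ..
    next
      case 3
      then have "w a < w b" "w a > 0" "w b > 0" using inc3'[of a b] pos3 m by auto
      then show ?thesis using inv by auto
    qed
  next
    case pl
    have ab: "a \<in> {1..n}" "b \<in> {1..n}" using pl by auto
    have inv: "if \<bar>w a\<bar> < \<bar>w b\<bar> then w a < 0 else w b < 0" using invP[of a b] pl a by simp
    consider "a \<le> k" "k < b" | "b \<le> k" | "k < a" using pl by linarith
    then show ?thesis
    proof cases
      case 1 then show ?thesis using pl by (auto simp: base_region_def)
    next
      case 2 then show ?thesis using pl by (auto simp: top_region_def)
    next
      case 3
      then have "w a > 0" "w b > 0" using pos3 pl by auto
      then show ?thesis using inv by (auto split: if_splits)
    qed
  next
    case s
    show ?thesis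
    proof (cases "a \<le> k")
      case True then show ?thesis using s by (auto simp: base_region_def)
    next
      case False
      then have "w a > 0" using pos3 s by auto
      then show ?thesis using invS[of a] s a by simp
    qed
  qed
qed

lemma lamS_Inv:
  assumes "1 \<le> a" "a \<le> k"
  shows "lamS k n (Inv n w) a = lamw a"
proof -
  have "{p \<in> {1..2*(n-k)+1}. broot k n a p \<in> Inv n w} = {1..lamw a}"
    using bmemw[OF assms] lamw_le[of a] by auto
  then show ?thesis unfolding lamS_def by simp
qed

lemma Inv_ideal_base: "lower_ideal n (base_region k n) (Inv n w \<inter> base_region k n)"
proof (rule lam_ideal[where lam = lamw])
  show "Inv n w \<inter> base_region k n \<subseteq> base_region k n" by simp
  show "k < n" by (rule kn)
  show "\<And>a p. 1 \<le> a \<Longrightarrow> a \<le> k \<Longrightarrow> 1 \<le> p \<Longrightarrow> p \<le> 2*(n-k)+1 \<Longrightarrow>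
          broot k n a p \<in> Inv n w \<inter> base_region k n \<longleftrightarrow> p \<le> lamw a"
    using bmemw broot_in_base kn by auto
  show "\<And>a a'. 1 \<le> a \<Longrightarrow> a \<le> a' \<Longrightarrow> a' \<le> k \<Longrightarrow> lamw a \<le> lamw a'"
    by (rule lamw_mono)
qed

lemma Inv_ideal_top: "lower_ideal n (top_region k) (Inv n w \<inter> top_region k)"
  unfolding lower_ideal_def
proof (intro conjI ballI impI)
  show "Inv n w \<inter> top_region k \<subseteq> top_region k" by simp
next
  fix \<alpha> \<beta> assume a: "\<alpha> \<in> Inv n w \<inter> top_region k" and b: "\<beta> \<in> top_region k" and le: "root_le n \<beta> \<alpha>"
  obtain a c where ac: "1 \<le> a" "a < c" "c \<le> k" "\<alpha> = RPlus a c" using a by (auto simp: top_region_def)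
  obtain a' c' where ac': "1 \<le> a'" "a' < c'" "c' \<le> k" "\<beta> = RPlus a' c'" using b by (auto simp: top_region_def)
  have o: "a \<le> a'" "c \<le> c'" using top_le[of a c n a' c'] ac ac' le kn by auto
  have i: "w c < 0" "\<bar>w a\<bar> > \<bar>w c\<bar>" using topchar[OF ac(1-3)] a ac by auto
  have cc: "c \<in> {1..n}" "c' \<in> {1..n}" "a \<in> {1..n}" "a' \<in> {1..n}" using ac ac' kn by auto
  have cr: "k - r < c" using sign_cases[OF cc(1)] i by auto
  have wc': "w c' < 0" using sign_cases[OF cc(2)] cr o ac' by auto
  have c'c: "\<bar>w c'\<bar> \<le> \<bar>w c\<bar>"
  proof (cases "c = c'")
    case False then show ?thesis using dec2'[of c c'] cr o ac' by simp
  qed simp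
  have "\<bar>w a'\<bar> > \<bar>w c'\<bar>"
  proof (cases "w a' < 0")
    case True
    then have "k - r < a'" using sign_cases[OF cc(4)] by auto
    then show ?thesis using dec2'[of a' c'] ac' by simp
  next
    case False
    then have a'r: "a' \<le> k - r" using sign_cases[OF cc(4)] ac' by auto
    then have pa': "w a' > 0" using pos1 ac' by auto
    have "a \<le> k - r" using a'r o by simp
    then have pa: "w a > 0" using pos1 ac by auto
    have "w a \<le> w a'"
    proof (cases "a = a'")
      case False then show ?thesis using inc1'[of a a'] o ac a'r by simp
    qed simp
    then show ?thesis using pa pa' i c'c by simp
  qed
  then show "\<beta> \<in> Inv n w \<inter> top_region k" using topchar[OF ac'(1-3)] wc' ac' b by simp
qed

lemma Inv_cond:
  assumes "1 \<le> a" "a < c" "c \<le> k"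
  shows "(lamw a + lamw c > 2*(n-k)+1 \<longrightarrow> RPlus a c \<in> Inv n w)
       \<and> (lamw a + lamw c < 2*(n-k)+1 \<longrightarrow> RPlus a c \<notin> Inv n w)"
proof -
  have ac: "a \<in> {1..n}" "c \<in> {1..n}" using assms kn by auto
  have ne: "\<bar>w a\<bar> \<noteq> \<bar>w c\<bar>" using absinj[OF ac] assms by simp
  show ?thesis
  proof (cases "w c > 0")
    case True
    then have cr: "c \<le> k - r" using sign_cases[OF ac(2)] assms by auto
    then have "w a > 0" using pos1 assms by auto
    then have "lamw a + lamw c \<le> 2*(n-k)" using lamw_pos_le[of a] lamw_pos_le[of c] True by linarith
    then show ?thesis using topchar[OF assms] True by auto
  next
    case False
    then have nc: "w c < 0" using nz[OF ac(2)] by simp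
    show ?thesis
    proof (cases "w a < 0")
      case True
      then have "k - r < a" using sign_cases[OF ac(1)] by auto
      then have "\<bar>w a\<bar> > \<bar>w c\<bar>" using dec2'[of a c] assms by simp
      moreover have "lamw a + lamw c \<ge> 2*(n-k)+2" using lamw_neg_ge[of a] lamw_neg_ge[of c] True nc by linarith
      ultimately show ?thesis using topchar[OF assms] nc by auto
    next
      case False
      then have pa: "w a > 0" using nz[OF ac(1)] by simp
      define A where "A = {b \<in> {k+1..n}. w b < w a}"
      define B where "B = {b \<in> {k+1..n}. w b > - w c}"
      have la: "lamw a = card A" using pa by (simp add: lamw_def A_def)
      have lc: "lamw c = n-k+1 + card B" using nc by (simp add: lamw_def B_def)
      have fA: "finite A" "finite B" by (simp_all add: A_def B_def)
      show ?thesis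
      proof (cases "w a > - w c")
        case True
        have "A \<union> B = {k+1..n}" using True unfolding A_def B_def by auto
        then have "n - k \<le> card A + card B" using card_Un_le[of A B] by simp
        then show ?thesis using topchar[OF assms] True nc pa la lc by auto
      next
        case False
        then have lt: "w a < - w c" using ne pa nc by auto
        have "A \<inter> B = {}" using lt unfolding A_def B_def by auto
        moreover have "A \<union> B \<subseteq> {k+1..n}" unfolding A_def B_def by auto
        ultimately have "card A + card B \<le> n - k"
          using card_Un_disjoint[OF fA] card_mono[of "{k+1..n}" "A \<union> B"] by simp
        then show ?thesis using topchar[OF assms] lt nc pa la lc by auto
      qed
    qed
  qed
qed

lemma Inv_Theta: "Inv n w \<in> Theta k n"
  unfolding Theta_def
proof (intro CollectI conjI allI impI)
  show "Inv n w \<subseteq> base_region k n \<union> top_region k" by (rule Inv_sub)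
  show "lower_ideal n (base_region k n) (Inv n w \<inter> base_region k n)" by (rule Inv_ideal_base)
  show "lower_ideal n (top_region k) (Inv n w \<inter> top_region k)" by (rule Inv_ideal_top)
next
  fix a b assume t: "RPlus a b \<in> top_region k"
    and g: "2*n+1-2*k < card (Inv n w \<inter> (base_row k n (k+1-a) \<union> base_row k n (k+1-b)))"
  have ab: "1 \<le> a" "a < b" "b \<le> k" using t by (auto simp: top_region_def)
  have "card (Inv n w \<inter> (base_row k n (k+1-a) \<union> base_row k n (k+1-b))) = lamw a + lamw b"
    using rowcard_gen[OF ab kn] lamS_Inv ab by simp
  then show "RPlus a b \<in> Inv n w" using Inv_cond[OF ab] g kn by auto
next
  fix a b assume t: "RPlus a b \<in> top_region k"
    and g: "card (Inv n w \<inter> (base_row k n (k+1-a) \<union> base_row k n (k+1-b))) < 2*n+1-2*k"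
  have ab: "1 \<le> a" "a < b" "b \<le> k" using t by (auto simp: top_region_def)
  have "card (Inv n w \<inter> (base_row k n (k+1-a) \<union> base_row k n (k+1-b))) = lamw a + lamw b"
    using rowcard_gen[OF ab kn] lamS_Inv ab by simp
  then show "RPlus a b \<notin> Inv n w" using Inv_cond[OF ab] g kn by auto
qed

end




context wperm begin

definition gw :: "nat \<Rightarrow> nat" where
  "gw c = (if w c > 0 then card {b \<in> {k+1..n}. w b < w c} else 2*n-k+1 - nat \<bar>w c\<bar>)"

lemma card_above:
  assumes "c \<in> {1..n}"
  shows "card {p \<in> {1..n}. \<bar>w p\<bar> > \<bar>w c\<bar>} = n - nat \<bar>w c\<bar>"
proof -
  define f where "f = (\<lambda>a. nat \<bar>w a\<bar>)"
  define z where "z = nat \<bar>w c\<bar>"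
  have injf: "inj_on f {1..n}" using bij unfolding f_def by (rule bij_betw_imp_inj_on)
  have surjf: "f ` {1..n} = {1..n}" using bij unfolding f_def by (rule bij_betw_imp_surj_on)
  have D: "{p \<in> {1..n}. \<bar>w p\<bar> > \<bar>w c\<bar>} = {p \<in> {1..n}. f p > z}"
    unfolding f_def z_def by auto
  have inj: "inj_on f {p \<in> {1..n}. f p > z}"
    by (rule inj_on_subset[OF injf]) auto
  have zz: "z \<ge> 1" using absrange_nat[OF assms] z_def by simp
  have im: "f ` {p \<in> {1..n}. f p > z} = {z+1..n}"
  proof
    show "f ` {p \<in> {1..n}. f p > z} \<subseteq> {z+1..n}"
    proof
      fix x assume "x \<in> f ` {p \<in> {1..n}. f p > z}"
      then obtain p where p: "p \<in> {1..n}" "f p > z" "x = f p" by blast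
      have "f p \<in> {1..n}" using surjf p(1) by blast
      then show "x \<in> {z+1..n}" using p by simp
    qed
  next
    show "{z+1..n} \<subseteq> f ` {p \<in> {1..n}. f p > z}"
    proof
      fix x assume x: "x \<in> {z+1..n}"
      then have "x \<in> {1..n}" using zz by simp
      then have "x \<in> f ` {1..n}" using surjf by simp
      then obtain p where "p \<in> {1..n}" "x = f p" by blast
      then show "x \<in> f ` {p \<in> {1..n}. f p > z}" using x by auto
    qed
  qed
  have "card {p \<in> {1..n}. f p > z} = card {z+1..n}" using card_image[OF inj] im by simp
  then show ?thesis using D z_def by simp
qed

lemma G_Inv:
  assumes "1 \<le> c" "c \<le> k"
  shows "lamS k n (Inv n w) c + card (U (Inv n w) c) = gw c"
proof -
  have cc: "c \<in> {1..n}" using assms kn by auto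
  show ?thesis
  proof (cases "w c > 0")
    case True
    have "a \<notin> U (Inv n w) c" for a
    proof
      assume "a \<in> U (Inv n w) c"
      then have "1 \<le> a" "a < c" "RPlus a c \<in> Inv n w" by (auto simp: U_def)
      then show False using topchar[of a c] True assms by simp
    qed
    then have "U (Inv n w) c = {}" by blast
    then show ?thesis using lamS_Inv[OF assms] True by (simp add: gw_def lamw_def)
  next
    case False
    then have nc: "w c < 0" using nz[OF cc] by simp
    then have cr: "k - r < c" using sign_cases[OF cc] by auto
    define B where "B = {b \<in> {k+1..n}. w b > - w c}"
    have Ue: "U (Inv n w) c = {a. 1 \<le> a \<and> a < c \<and> \<bar>w a\<bar> > \<bar>w c\<bar>}"
    proof (rule set_eqI)
      fix a
      show "a \<in> U (Inv n w) c \<longleftrightarrow> a \<in> {a. 1 \<le> a \<and> a < c \<and> \<bar>w a\<bar> > \<bar>w c\<bar>}"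
      proof (cases "1 \<le> a \<and> a < c")
        case True then show ?thesis using topchar[of a c] assms nc by (simp add: U_def)
      next
        case False then show ?thesis by (auto simp: U_def)
      qed
    qed
    have D: "{p \<in> {1..n}. \<bar>w p\<bar> > \<bar>w c\<bar>} = U (Inv n w) c \<union> B"
    proof
      show "{p \<in> {1..n}. \<bar>w p\<bar> > \<bar>w c\<bar>} \<subseteq> U (Inv n w) c \<union> B"
      proof
        fix p assume p: "p \<in> {p \<in> {1..n}. \<bar>w p\<bar> > \<bar>w c\<bar>}"
        consider "p < c" | "p = c" | "c < p" "p \<le> k" | "k < p" by linarith
        then show "p \<in> U (Inv n w) c \<union> B"
        proof cases
          case 1 then show ?thesis using p Ue by auto
        next
          case 2 then show ?thesis using p by auto
        next
          case 3
          then have "\<bar>w c\<bar> > \<bar>w p\<bar>" using dec2'[of c p] cr by simp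
          then show ?thesis using p by auto
        next
          case 4
          then have "w p > 0" using pos3 p by auto
          then show ?thesis using p 4 nc by (auto simp: B_def)
        qed
      qed
    next
      show "U (Inv n w) c \<union> B \<subseteq> {p \<in> {1..n}. \<bar>w p\<bar> > \<bar>w c\<bar>}"
      proof
        fix p assume "p \<in> U (Inv n w) c \<union> B"
        then show "p \<in> {p \<in> {1..n}. \<bar>w p\<bar> > \<bar>w c\<bar>}"
        proof
          assume "p \<in> U (Inv n w) c" then show ?thesis using Ue assms kn by auto
        next
          assume p: "p \<in> B"
          then have "w p > 0" using pos3 by (auto simp: B_def)
          then show ?thesis using p nc by (auto simp: B_def)
        qed
      qed
    qed
    have disj: "U (Inv n w) c \<inter> B = {}" using U_sub[of "Inv n w" c] assms by (auto simp: B_def)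
    have fin: "finite B" by (simp add: B_def)
    have "card (U (Inv n w) c) + card B = n - nat \<bar>w c\<bar>"
      using card_above[OF cc] D card_Un_disjoint[OF U_fin fin disj] by simp
    moreover have "lamS k n (Inv n w) c = n - k + 1 + card B"
      using lamS_Inv[OF assms] nc by (simp add: lamw_def B_def)
    moreover have "nat \<bar>w c\<bar> \<le> n" using absrange_nat[OF cc] by simp
    ultimately show ?thesis using nc kn by (simp add: gw_def)
  qed
qed

lemma fk_Inv:
  assumes "j < k"
  shows "f_k k n (Inv n w) ! j = gw (k-j)"
  using fk_nth[OF assms kn] G_Inv[of "k-j"] assms by simp

end




lemma sorted_count:
  fixes xs :: "nat list"
  assumes "sorted_wrt (<) xs" "i < length xs"
  shows "card {x \<in> set xs. x < xs ! i} = i"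
proof -
  have "{x \<in> set xs. x < xs ! i} = (\<lambda>j. xs ! j) ` {..<i}"
  proof
    show "{x \<in> set xs. x < xs ! i} \<subseteq> (\<lambda>j. xs ! j) ` {..<i}"
    proof
      fix x assume x: "x \<in> {x \<in> set xs. x < xs ! i}"
      then obtain j where j: "j < length xs" "x = xs ! j" by (auto simp: in_set_conv_nth)
      have "j < i"
      proof (rule ccontr)
        assume "\<not> j < i"
        then have "i \<le> j" by simp
        then have "xs ! i \<le> xs ! j"
          using sorted_wrt_nth_less[OF assms(1), of i j] j by (cases "i = j") auto
        then show False using x j by simp
      qed
      then show "x \<in> (\<lambda>j. xs ! j) ` {..<i}" using j by auto
    qed
  next
    show "(\<lambda>j. xs ! j) ` {..<i} \<subseteq> {x \<in> set xs. x < xs ! i}"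
    proof
      fix x assume "x \<in> (\<lambda>j. xs ! j) ` {..<i}"
      then obtain j where j: "j < i" "x = xs ! j" by auto
      then have "xs ! j < xs ! i" using sorted_wrt_nth_less[OF assms(1), of j i] assms(2) by simp
      then show "x \<in> {x \<in> set xs. x < xs ! i}" using j assms(2) by auto
    qed
  qed
  moreover have "inj_on (\<lambda>j. xs ! j) {..<i}"
  proof (rule inj_onI)
    fix a b assume ab: "a \<in> {..<i}" "b \<in> {..<i}" "xs ! a = xs ! b"
    have "distinct xs" using assms(1) strict_sorted_iff by blast
    then show "a = b" using ab assms(2) nth_eq_iff_index_eq[of xs a b] by simp
  qed
  ultimately show ?thesis by (simp add: card_image)
qed

lemma upclosed_interval:
  fixes N :: "nat set"
  assumes "N \<subseteq> {1..k}" "\<And>c c'. c \<in> N \<Longrightarrow> c \<le> c' \<Longrightarrow> c' \<le> k \<Longrightarrow> c' \<in> N"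
  shows "N = {k - card N + 1..k}"
proof (cases "N = {}")
  case True then show ?thesis by simp
next
  case False
  have fin: "finite N" using assms(1) finite_subset by blast
  define M where "M = Min N"
  have "M \<in> N" using False fin M_def by simp
  then have Mk: "1 \<le> M" "M \<le> k" using assms(1) by auto
  have "N = {M..k}"
  proof
    show "N \<subseteq> {M..k}" using assms(1) fin M_def by auto
    show "{M..k} \<subseteq> N" using assms(2) \<open>M \<in> N\<close> by auto
  qed
  then show ?thesis using Mk by simp
qed

lemma list_antimono:
  fixes \<gamma> :: "nat list"
  assumes "\<forall>i. Suc i < length \<gamma> \<longrightarrow> \<gamma>!i \<ge> \<gamma>!(Suc i)" "i \<le> j" "j < length \<gamma>"
  shows "\<gamma>!j \<le> \<gamma>!i"
  using assms(2,3)
proof (induction j)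
  case 0 then show ?case by simp
next
  case (Suc j)
  show ?case
  proof (cases "i = Suc j")
    case True then show ?thesis by simp
  next
    case False
    then have "i \<le> j" using Suc.prems by simp
    then have "\<gamma>!j \<le> \<gamma>!i" using Suc by simp
    moreover have "\<gamma>!(Suc j) \<le> \<gamma>!j" using assms(1) Suc.prems by simp
    ultimately show ?thesis by simp
  qed
qed

locale gcons =
  fixes k n :: nat and \<gamma> :: "nat list"
  assumes k1: "1 \<le> k" and kn: "k < n" and gP: "\<gamma> \<in> P_part (n-k) n"
begin

lemma len: "length \<gamma> = k" using gP kn by (simp add: P_part_def)
lemma dec: "\<forall>i. Suc i < length \<gamma> \<longrightarrow> \<gamma>!i \<ge> \<gamma>!(Suc i)" using gP by (simp add: P_part_def)
lemma bnd: "\<forall>i < length \<gamma>. \<gamma>!i \<le> n + (n-k)" using gP by (simp add: P_part_def)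
lemma strict: "\<forall>i. Suc i < length \<gamma> \<longrightarrow> \<gamma>!i > n-k \<longrightarrow> \<gamma>!i > \<gamma>!(Suc i)" using gP by (simp add: P_part_def)

definition g :: "nat \<Rightarrow> nat" where "g c = \<gamma> ! (k - c)"

lemma g_mono:
  assumes "1 \<le> c" "c \<le> c'" "c' \<le> k"
  shows "g c \<le> g c'"
  unfolding g_def using list_antimono[OF dec, of "k-c'" "k-c"] assms len by simp

lemma g_bound: "1 \<le> c \<Longrightarrow> c \<le> k \<Longrightarrow> g c \<le> n + (n-k)"
  unfolding g_def using bnd len by simp

lemma g_strict:
  assumes "2 \<le> c" "c \<le> k" "g c > n-k"
  shows "g (c-1) < g c"
proof -
  have e: "k - (c-1) = Suc (k-c)" using assms by simp
  show ?thesis unfolding g_def e using strict[rule_format, of "k-c"] assms len by (simp add: g_def)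
qed

definition N :: "nat set" where "N = {c \<in> {1..k}. g c > n-k}"
definition r :: nat where "r = card N"

lemma N_eq: "N = {k-r+1..k}"
  unfolding r_def
proof (rule upclosed_interval)
  show "N \<subseteq> {1..k}" by (auto simp: N_def)
  show "\<And>c c'. c \<in> N \<Longrightarrow> c \<le> c' \<Longrightarrow> c' \<le> k \<Longrightarrow> c' \<in> N"
  proof -
    fix c c' assume "c \<in> N" "c \<le> c'" "c' \<le> k"
    then show "c' \<in> N" using g_mono[of c c'] by (auto simp: N_def)
  qed
qed

lemma rk: "r \<le> k"
proof -
  have "card N \<le> card {1..k}" by (rule card_mono) (auto simp: N_def)
  then show ?thesis by (simp add: r_def)
qed

lemma neg_iff:
  assumes "1 \<le> c" "c \<le> k"
  shows "g c > n-k \<longleftrightarrow> k - r < c"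
proof -
  have "g c > n-k \<longleftrightarrow> c \<in> N" using assms by (simp add: N_def)
  also have "\<dots> \<longleftrightarrow> k - r < c" unfolding N_eq using assms rk by auto
  finally show ?thesis .
qed

lemma g_strict2:
  assumes "k - r < c" "c < c'" "c' \<le> k" "1 \<le> c"
  shows "g c < g c'"
proof -
  have "g c' > n-k" using neg_iff[of c'] assms by simp
  then have "g (c'-1) < g c'" using g_strict[of c'] assms by simp
  moreover have "g c \<le> g (c'-1)" using g_mono[of c "c'-1"] assms by simp
  ultimately show ?thesis by simp
qed

end




context gcons begin

definition z :: "nat \<Rightarrow> nat" where "z c = 2*n-k+1 - g c"
definition Z :: "nat set" where "Z = z ` {k-r+1..k}"
definition C :: "nat set" where "C = {1..n} - Z"
definition us :: "nat list" where "us = sorted_list_of_set C"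
definition idx :: "nat \<Rightarrow> nat" where "idx c = c - 1 + g c"
definition y :: "nat \<Rightarrow> nat" where "y c = us ! idx c"
definition Ys :: "nat set" where "Ys = y ` {1..k-r}"
definition V :: "nat set" where "V = C - Ys"
definition vs :: "nat list" where "vs = sorted_list_of_set V"
definition ww :: "nat \<Rightarrow> int" where
  "ww a = (if 1 \<le> a \<and> a \<le> k-r then int (y a) else if k-r < a \<and> a \<le> k then - int (z a)
           else if k < a \<and> a \<le> n then int (vs ! (a-k-1)) else 0)"

lemma negc: "k - r < c \<Longrightarrow> c \<le> k \<Longrightarrow> g c > n-k \<and> g c \<le> n + (n-k)"
  using neg_iff[of c] g_bound[of c] by simp

lemma posc: "1 \<le> c \<Longrightarrow> c \<le> k - r \<Longrightarrow> g c \<le> n-k"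
proof -
  assume c: "1 \<le> c" "c \<le> k - r"
  then have "c \<le> k" by simp
  then show ?thesis using neg_iff[of c] c by linarith
qed

lemma z_range: "k - r < c \<Longrightarrow> c \<le> k \<Longrightarrow> 1 \<le> z c \<and> z c \<le> n"
proof -
  assume c: "k - r < c" "c \<le> k"
  then have "g c > n-k" "g c \<le> n + (n-k)" using negc[of c] by auto
  then show ?thesis using kn unfolding z_def by linarith
qed

lemma z_dec: "k - r < c \<Longrightarrow> c < c' \<Longrightarrow> c' \<le> k \<Longrightarrow> z c' < z c"
proof -
  assume c: "k - r < c" "c < c'" "c' \<le> k"
  then have "g c < g c'" "g c' \<le> n + (n-k)" using g_strict2[of c c'] negc[of c'] by auto
  then show ?thesis using kn unfolding z_def by linarith
qed

lemma z_inj: "inj_on z {k-r+1..k}"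
proof (rule inj_onI)
  fix a b assume ab: "a \<in> {k-r+1..k}" "b \<in> {k-r+1..k}" "z a = z b"
  show "a = b"
  proof (rule ccontr)
    assume "a \<noteq> b"
    then consider "a < b" | "b < a" by linarith
    then show False
    proof cases
      case 1 then show False using z_dec[of a b] ab by simp
    next
      case 2 then show False using z_dec[of b a] ab by simp
    qed
  qed
qed

lemma card_Z: "card Z = r"
  unfolding Z_def using card_image[OF z_inj] rk by simp

lemma Z_sub: "Z \<subseteq> {1..n}"
  unfolding Z_def using z_range by auto

lemma fin_C: "finite C" by (simp add: C_def)

lemma card_C: "card C = n - r"
  unfolding C_def using card_Diff_subset[OF _ Z_sub] card_Z finite_subset[OF Z_sub] by simp

lemma us_len: "length us = n - r" unfolding us_def using card_C by simp
lemma us_set: "set us = C" unfolding us_def using fin_C by simp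
lemma us_sorted: "sorted_wrt (<) us" unfolding us_def by (rule strict_sorted_list_of_set)

lemma idx_bound: "1 \<le> c \<Longrightarrow> c \<le> k - r \<Longrightarrow> idx c < n - r"
  using posc[of c] rk kn unfolding idx_def by simp

lemma idx_mono: "1 \<le> c \<Longrightarrow> c < c' \<Longrightarrow> c' \<le> k - r \<Longrightarrow> idx c < idx c'"
proof -
  assume c: "1 \<le> c" "c < c'" "c' \<le> k - r"
  then have "g c \<le> g c'" using g_mono[of c c'] by simp
  then show ?thesis using c unfolding idx_def by linarith
qed

lemma y_in: "1 \<le> c \<Longrightarrow> c \<le> k - r \<Longrightarrow> y c \<in> C"
  using idx_bound[of c] us_len us_set unfolding y_def by (metis nth_mem)

lemma y_mono: "1 \<le> c \<Longrightarrow> c < c' \<Longrightarrow> c' \<le> k - r \<Longrightarrow> y c < y c'"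
  unfolding y_def using sorted_wrt_nth_less[OF us_sorted, of "idx c" "idx c'"] idx_mono[of c c'] idx_bound[of c'] us_len
  by simp

lemma y_inj: "inj_on y {1..k-r}"
proof (rule inj_onI)
  fix a b assume ab: "a \<in> {1..k-r}" "b \<in> {1..k-r}" "y a = y b"
  show "a = b"
  proof (rule ccontr)
    assume "a \<noteq> b"
    then consider "a < b" | "b < a" by linarith
    then show False
    proof cases
      case 1 then show False using y_mono[of a b] ab by simp
    next
      case 2 then show False using y_mono[of b a] ab by simp
    qed
  qed
qed

lemma Ys_sub: "Ys \<subseteq> C" unfolding Ys_def using y_in by auto

lemma card_Ys: "card Ys = k - r" unfolding Ys_def using card_image[OF y_inj] by simp

lemma card_V: "card V = n - k"
  unfolding V_def using card_Diff_subset[OF _ Ys_sub] card_Ys card_C finite_subset[OF Ys_sub fin_C] rk kn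
  by simp

lemma fin_V: "finite V" unfolding V_def using fin_C by simp
lemma vs_len: "length vs = n - k" unfolding vs_def using card_V by simp
lemma vs_set: "set vs = V" unfolding vs_def using fin_V by simp
lemma vs_sorted: "sorted_wrt (<) vs" unfolding vs_def by (rule strict_sorted_list_of_set)

lemma C_sub: "C \<subseteq> {1..n}" by (auto simp: C_def)
lemma V_sub: "V \<subseteq> {1..n}" using C_sub by (auto simp: V_def)

lemma vs_in: "k < a \<Longrightarrow> a \<le> n \<Longrightarrow> vs ! (a-k-1) \<in> V"
proof -
  assume a: "k < a" "a \<le> n"
  then have "a - k - 1 < length vs" using vs_len by simp
  then have "vs ! (a-k-1) \<in> set vs" by (rule nth_mem)
  then show ?thesis using vs_set by simp
qed

end




context gcons begin

lemma ww1: "1 \<le> a \<Longrightarrow> a \<le> k - r \<Longrightarrow> ww a = int (y a)" by (simp add: ww_def)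
lemma ww2: "k - r < a \<Longrightarrow> a \<le> k \<Longrightarrow> ww a = - int (z a)" by (simp add: ww_def)
lemma ww3: "k < a \<Longrightarrow> a \<le> n \<Longrightarrow> ww a = int (vs ! (a-k-1))"
proof -
  assume a: "k < a" "a \<le> n"
  then have "\<not> (1 \<le> a \<and> a \<le> k - r)" "\<not> (k - r < a \<and> a \<le> k)" by auto
  then show ?thesis using a unfolding ww_def by simp
qed

lemma ww_abs: "a \<in> {1..n} \<Longrightarrow> nat \<bar>ww a\<bar> = (if a \<le> k - r then y a else if a \<le> k then z a else vs ! (a-k-1))"
proof -
  assume a: "a \<in> {1..n}"
  consider "a \<le> k - r" | "k - r < a" "a \<le> k" | "k < a" by linarith
  then show ?thesis
  proof cases
    case 1 then show ?thesis using ww1[of a] a by simp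
  next
    case 2 then show ?thesis using ww2[of a] by simp
  next
    case 3
    then have "\<not> a \<le> k - r" "\<not> a \<le> k" by auto
    then show ?thesis using ww3[of a] a 3 by simp
  qed
qed

lemma image_full: "(\<lambda>a. nat \<bar>ww a\<bar>) ` {1..n} = {1..n}"
proof
  show "(\<lambda>a. nat \<bar>ww a\<bar>) ` {1..n} \<subseteq> {1..n}"
  proof
    fix x assume "x \<in> (\<lambda>a. nat \<bar>ww a\<bar>) ` {1..n}"
    then obtain a where a: "a \<in> {1..n}" "x = nat \<bar>ww a\<bar>" by blast
    consider "a \<le> k - r" | "k - r < a" "a \<le> k" | "k < a" by linarith
    then show "x \<in> {1..n}"
    proof cases
      case 1 then show ?thesis using a ww_abs[OF a(1)] y_in[of a] C_sub by auto
    next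
      case 2 then show ?thesis using a ww_abs[OF a(1)] z_range[of a] by auto
    next
      case 3 then show ?thesis using a ww_abs[OF a(1)] vs_in[of a] V_sub rk by auto
    qed
  qed
next
  show "{1..n} \<subseteq> (\<lambda>a. nat \<bar>ww a\<bar>) ` {1..n}"
  proof
    fix x assume x: "x \<in> {1..n}"
    show "x \<in> (\<lambda>a. nat \<bar>ww a\<bar>) ` {1..n}"
    proof (cases "x \<in> Z")
      case True
      then obtain c where c: "c \<in> {k-r+1..k}" "x = z c" by (auto simp: Z_def)
      then have "c \<in> {1..n}" "nat \<bar>ww c\<bar> = x" using ww2[of c] kn by auto
      then show ?thesis by (metis imageI)
    next
      case False
      then have xC: "x \<in> C" using x by (simp add: C_def)
      show ?thesis
      proof (cases "x \<in> Ys")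
        case True
        then obtain c where c: "c \<in> {1..k-r}" "x = y c" by (auto simp: Ys_def)
        then have "c \<in> {1..n}" "nat \<bar>ww c\<bar> = x" using ww1[of c] kn by auto
        then show ?thesis by (metis imageI)
      next
        case False
        then have "x \<in> V" using xC by (simp add: V_def)
        then have "x \<in> set vs" using vs_set by simp
        then obtain j where j: "j < length vs" "x = vs ! j" by (auto simp: in_set_conv_nth)
        define a where "a = k + 1 + j"
        have a: "k < a" "a \<le> n" "a - k - 1 = j" using j vs_len kn unfolding a_def by auto
        then have "a \<in> {1..n}" "nat \<bar>ww a\<bar> = x" using ww3[of a] j by auto
        then show ?thesis by (metis imageI)
      qed
    qed
  qed
qed

lemma ww_bij: "bij_betw (\<lambda>a. nat \<bar>ww a\<bar>) {1..n} {1..n}"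
proof -
  have c: "card ((\<lambda>a. nat \<bar>ww a\<bar>) ` {1..n}) = card {1..n}" by (simp only: image_full)
  have "inj_on (\<lambda>a. nat \<bar>ww a\<bar>) {1..n}"
    by (rule eq_card_imp_inj_on) (simp, rule c)
  then show ?thesis unfolding bij_betw_def using image_full by simp
qed

lemma ww_wperm: "wperm k n ww r"
proof (unfold_locales)
  show "1 \<le> k" by (rule k1)
  show "k < n" by (rule kn)
  show "\<forall>a. a \<notin> {1..n} \<longrightarrow> ww a = 0" using kn by (auto simp: ww_def)
  show "bij_betw (\<lambda>a. nat \<bar>ww a\<bar>) {1..n} {1..n}" by (rule ww_bij)
  show "r \<le> k" by (rule rk)
  show "\<forall>a\<in>{1..k-r}. ww a > 0"
  proof
    fix a assume a: "a \<in> {1..k-r}"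
    then have "y a \<in> C" using y_in by simp
    then have "y a \<ge> 1" using C_sub by auto
    then show "ww a > 0" using ww1[of a] a by simp
  qed
  show "\<forall>a\<in>{k-r+1..k}. ww a < 0"
  proof
    fix a assume a: "a \<in> {k-r+1..k}"
    then show "ww a < 0" using ww2[of a] z_range[of a] by simp
  qed
  show "\<forall>a\<in>{k+1..n}. ww a > 0"
  proof
    fix a assume a: "a \<in> {k+1..n}"
    then have "vs ! (a-k-1) \<in> V" using vs_in by simp
    then have "vs ! (a-k-1) \<ge> 1" using V_sub by auto
    then show "ww a > 0" using ww3[of a] a by simp
  qed
  show "\<forall>a b. 1 \<le> a \<and> a < b \<and> b \<le> k - r \<longrightarrow> ww a < ww b"
  proof (intro allI impI)
    fix a b assume ab: "1 \<le> a \<and> a < b \<and> b \<le> k - r"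
    then show "ww a < ww b" using ww1[of a] ww1[of b] y_mono[of a b] by simp
  qed
  show "\<forall>a b. k - r + 1 \<le> a \<and> a < b \<and> b \<le> k \<longrightarrow> \<bar>ww a\<bar> > \<bar>ww b\<bar>"
  proof (intro allI impI)
    fix a b assume ab: "k - r + 1 \<le> a \<and> a < b \<and> b \<le> k"
    then show "\<bar>ww a\<bar> > \<bar>ww b\<bar>" using ww2[of a] ww2[of b] z_dec[of a b] by simp
  qed
  show "\<forall>a b. k + 1 \<le> a \<and> a < b \<and> b \<le> n \<longrightarrow> ww a < ww b"
  proof (intro allI impI)
    fix a b assume ab: "k + 1 \<le> a \<and> a < b \<and> b \<le> n"
    have i: "a-k-1 < b-k-1" "b-k-1 < length vs" using ab vs_len by auto
    then have "vs ! (a-k-1) < vs ! (b-k-1)"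
      using sorted_wrt_nth_less[OF vs_sorted i] by simp
    then show "ww a < ww b" using ww3[of a] ww3[of b] ab by simp
  qed
qed

end




context gcons begin

lemma gw_eq:
  assumes "1 \<le> c" "c \<le> k"
  shows "wperm.gw k n ww c = g c"
proof -
  interpret W: wperm k n ww r by (rule ww_wperm)
  show ?thesis
  proof (cases "c \<le> k - r")
    case True
    have wc: "ww c = int (y c)" using ww1[of c] assms True by simp
    have yc: "y c \<in> C" using y_in[of c] assms True by simp
    then have pos: "ww c > 0" using wc C_sub by auto
    define h where "h b = vs ! (b-k-1)" for b
    have e1: "{b \<in> {k+1..n}. ww b < ww c} = {b \<in> {k+1..n}. h b < y c}"
      using ww3 wc unfolding h_def by auto
    have injh: "inj_on h {b \<in> {k+1..n}. h b < y c}"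
    proof (rule inj_onI)
      fix a b assume ab: "a \<in> {b \<in> {k+1..n}. h b < y c}" "b \<in> {b \<in> {k+1..n}. h b < y c}" "h a = h b"
      have d: "distinct vs" using vs_sorted strict_sorted_iff by blast
      have "a-k-1 < length vs" "b-k-1 < length vs" using ab vs_len by auto
      then have "a-k-1 = b-k-1" using ab(3) nth_eq_iff_index_eq[OF d] unfolding h_def by blast
      then show "a = b" using ab by auto
    qed
    have imh: "h ` {b \<in> {k+1..n}. h b < y c} = {x \<in> V. x < y c}"
    proof
      show "h ` {b \<in> {k+1..n}. h b < y c} \<subseteq> {x \<in> V. x < y c}"
        using vs_in unfolding h_def by auto
    next
      show "{x \<in> V. x < y c} \<subseteq> h ` {b \<in> {k+1..n}. h b < y c}"
      proof
        fix x assume x: "x \<in> {x \<in> V. x < y c}"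
        then have "x \<in> set vs" using vs_set by simp
        then obtain j where j: "j < length vs" "x = vs ! j" by (auto simp: in_set_conv_nth)
        define a where "a = k + 1 + j"
        have a: "k < a" "a \<le> n" "a - k - 1 = j" using j vs_len kn unfolding a_def by auto
        then have "h a = x" using j unfolding h_def by simp
        then show "x \<in> h ` {b \<in> {k+1..n}. h b < y c}" using a x by (metis (mono_tags, lifting) Suc_eq_plus1 Suc_le_eq atLeastAtMost_iff imageI mem_Collect_eq)
      qed
    qed
    have c1: "card {b \<in> {k+1..n}. ww b < ww c} = card {x \<in> V. x < y c}"
      using e1 card_image[OF injh] imh by simp
    have Ysc: "{x \<in> Ys. x < y c} = y ` {1..<c}"
    proof
      show "{x \<in> Ys. x < y c} \<subseteq> y ` {1..<c}"
      proof
        fix x assume x: "x \<in> {x \<in> Ys. x < y c}"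
        then obtain c' where c': "c' \<in> {1..k-r}" "x = y c'" by (auto simp: Ys_def)
        have "c' < c"
        proof (rule ccontr)
          assume "\<not> c' < c"
          then have "y c \<le> y c'" using y_mono[of c c'] c' assms by (cases "c = c'") auto
          then show False using x c' by simp
        qed
        then show "x \<in> y ` {1..<c}" using c' by auto
      qed
    next
      show "y ` {1..<c} \<subseteq> {x \<in> Ys. x < y c}"
      proof
        fix x assume "x \<in> y ` {1..<c}"
        then obtain c' where c': "1 \<le> c'" "c' < c" "x = y c'" by auto
        then have "y c' < y c" using y_mono[of c' c] True by simp
        moreover have "x \<in> Ys" using c' True by (auto simp: Ys_def)
        ultimately show "x \<in> {x \<in> Ys. x < y c}" using c' by simp
      qed
    qed
    have cYs: "card {x \<in> Ys. x < y c} = c - 1"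
    proof -
      have "inj_on y {1..<c}" by (rule inj_on_subset[OF y_inj]) (use True in auto)
      then show ?thesis using Ysc by (simp add: card_image)
    qed
    have cC: "card {x \<in> C. x < y c} = idx c"
    proof -
      have "card {x \<in> set us. x < us ! idx c} = idx c"
        by (rule sorted_count[OF us_sorted]) (use idx_bound[of c] assms True us_len in simp)
      then show ?thesis using us_set unfolding y_def by simp
    qed
    have split: "{x \<in> C. x < y c} = {x \<in> V. x < y c} \<union> {x \<in> Ys. x < y c}"
      using Ys_sub unfolding V_def by auto
    have disj: "{x \<in> V. x < y c} \<inter> {x \<in> Ys. x < y c} = {}" unfolding V_def by auto
    have fins: "finite {x \<in> V. x < y c}" "finite {x \<in> Ys. x < y c}"
      using fin_V finite_subset[OF Ys_sub fin_C] by auto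
    have "card {x \<in> V. x < y c} + (c - 1) = c - 1 + g c"
      using cC split card_Un_disjoint[OF fins disj] cYs unfolding idx_def by simp
    then have "card {x \<in> V. x < y c} = g c" by simp
    then show ?thesis using c1 pos unfolding W.gw_def by simp
  next
    case False
    then have cr: "k - r < c" by simp
    have wc: "ww c = - int (z c)" using ww2[of c] cr assms by simp
    have zr: "1 \<le> z c" "z c \<le> n" using z_range[of c] cr assms by auto
    then have neg: "\<not> ww c > 0" using wc by simp
    have "g c \<le> n + (n-k)" using g_bound[of c] assms by simp
    then have "2*n-k+1 - z c = g c" using kn unfolding z_def by simp
    then show ?thesis using neg wc unfolding W.gw_def by simp
  qed
qed

lemma exists_w: "\<exists>w\<in>W_OG k n. f_k k n (Inv n w) = \<gamma>"
proof
  interpret W: wperm k n ww r by (rule ww_wperm)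
  show "ww \<in> W_OG k n" by (rule wperm_W_OG[OF ww_wperm])
  show "f_k k n (Inv n ww) = \<gamma>"
  proof (rule nth_equalityI)
    show "length (f_k k n (Inv n ww)) = length \<gamma>" using fk_length len by simp
  next
    fix j assume "j < length (f_k k n (Inv n ww))"
    then have j: "j < k" using fk_length by simp
    have "f_k k n (Inv n ww) ! j = W.gw (k-j)" using W.fk_Inv[OF j] .
    also have "\<dots> = g (k-j)" using gw_eq[of "k-j"] j by simp
    also have "\<dots> = \<gamma> ! j" unfolding g_def using j by simp
    finally show "f_k k n (Inv n ww) ! j = \<gamma> ! j" .
  qed
qed

end

theorem corollary3p9:
  fixes k n :: nat
  assumes "1 \<le> k" and "k < n"
  shows "Y_OG k n = Theta k n \<and> bij_betw (f_k k n) (Y_OG k n) (P_part (n - k) n)"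
proof -
  have th: "theta k n S" if "S \<in> Theta k n" for S
    using assms that by (simp add: theta_def)
  have Ysub: "Y_OG k n \<subseteq> Theta k n"
  proof
    fix S assume "S \<in> Y_OG k n"
    then obtain w where w: "w \<in> W_OG k n" "S = Inv n w" by (auto simp: Y_OG_def)
    then obtain r where "wperm k n w r" using W_OG_wperm assms by blast
    then show "S \<in> Theta k n" using wperm.Inv_Theta w by simp
  qed
  have ex: "\<exists>w\<in>W_OG k n. f_k k n (Inv n w) = \<gamma>" if "\<gamma> \<in> P_part (n-k) n" for \<gamma>
    using gcons.exists_w[of k n \<gamma>] assms that by (simp add: gcons_def)
  have Tsub: "Theta k n \<subseteq> Y_OG k n"
  proof
    fix S assume S: "S \<in> Theta k n"
    have "f_k k n S \<in> P_part (n-k) n" using theta.in_P[OF th[OF S]] .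
    then obtain w where w: "w \<in> W_OG k n" "f_k k n (Inv n w) = f_k k n S" using ex by blast
    have "Inv n w \<in> Theta k n" using w(1) Ysub by (auto simp: Y_OG_def)
    then have "Inv n w = S" using theta_inj[OF th th[OF S] w(2)] by simp
    then show "S \<in> Y_OG k n" using w(1) by (auto simp: Y_OG_def)
  qed
  have eq: "Y_OG k n = Theta k n" using Ysub Tsub by blast
  have inj: "inj_on (f_k k n) (Y_OG k n)"
    unfolding eq by (rule inj_onI) (use theta_inj th in blast)
  have im: "f_k k n ` Y_OG k n = P_part (n-k) n"
  proof
    show "f_k k n ` Y_OG k n \<subseteq> P_part (n-k) n" unfolding eq using theta.in_P th by blast
  next
    show "P_part (n-k) n \<subseteq> f_k k n ` Y_OG k n"
    proof
      fix \<gamma> assume "\<gamma> \<in> P_part (n-k) n"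
      then obtain w where w: "w \<in> W_OG k n" "f_k k n (Inv n w) = \<gamma>" using ex by blast
      then have "Inv n w \<in> Y_OG k n" by (auto simp: Y_OG_def)
      then show "\<gamma> \<in> f_k k n ` Y_OG k n" using w(2) by force
    qed
  qed
  show ?thesis using eq inj im unfolding bij_betw_def by simp
qed



end
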